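(* Let $n,k,s$ be positive integers with $2\le s\le\lfloor n/k\rfloor$, let $d=\lfloor n/s\rfloor$, and let $\alpha,\beta>0$. Let $F^*(\alpha,d\beta)$ denote the minimum, over all finite sequences of failures and repairs and all data collectors, of the min-cut separating the data collector from the source in the information flow graph of the FCRS with storage $\alpha$ and per-helper download $\beta$. Then $$F^*(\alpha,d\beta)=\begin{cases}kd\beta-\lfloor k/2\rfloor\lceil k/2\rceil\beta & \text{if } d\le\alpha/\beta,\\ k_1\alpha+(d-k_1)(k-k_1)\beta & \text{if } d+k-2k_1-1\le\alpha/\beta<\min\{d+k-2k_1+1,\ d\} \text{ for } k_1\in[\lceil k/2\rceil:k],\\ k\alpha & \text{if } \alpha/\beta<d-k-1.\end{cases}$$
   Context: Notation: $[a:b]=\{a,\dots,b\}$. FCRS: $n=ds+s_0$ servers ($s_0=n\bmod s$) in clusters $1,\dots,s$ of size $d$ and cluster $s+1$ of size $s_0$; server $j$ of cluster $i$ is $(i,j)$. Information flow graph: a source node; for every server and time $t\ge0$ an in-node and out-node joined by an edge of capacity $\alpha$; at $t=0$ the source connects to every in-node with infinite capacity. At the end of each time slot $t-1$ exactly one server $(r,\ell)$ fails; a repair cluster $i\in[s]$ with $i\ne r$ is chosen arbitrarily (cluster $s+1$ never serves as repair group), and there are edges of capacity $\beta$ from the time-$(t-1)$ out-nodes of all $d$ servers of cluster $i$ to the time-$t$ in-node of $(r,\ell)$; every other server has an infinite-capacity edge from its time-$(t-1)$ out-node to its time-$t$ in-node. A data collector at time $t$ is a node receiving infinite-capacity edges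 from the time-$t$ out-nodes of some $k$ distinct servers. *)

theory Defs
  imports Complex_Main "HOL-Library.Extended_Real"
begin

text \<open>Servers of the FCRS with n servers and s clusters: server (i,j) is server j of
  cluster i; clusters 1..s have size d = n div s, cluster s+1 has size n mod s.\<close>
definition servers :: "nat \<Rightarrow> nat \<Rightarrow> (nat \<times> nat) set" where
  "servers n s = {(i, j). (1 \<le> i \<and> i \<le> s \<and> 1 \<le> j \<and> j \<le> n div s)
                        \<or> (i = s + 1 \<and> 1 \<le> j \<and> j \<le> n mod s)}"

text \<open>A failure/repair sequence: entry t (0-based) is ((r,l), i): at the end of slot t
  server (r,l) fails and is repaired (at time t+1) from cluster i.\<close>
definition valid_seq :: "nat \<Rightarrow> nat \<Rightarrow> ((nat \<times> nat) \<times> nat) list \<Rightarrow> bool" where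
  "valid_seq n s fs = (\<forall>e \<in> set fs. fst e \<in> servers n s \<and> snd e \<in> {1..s}
                                      \<and> snd e \<noteq> fst (fst e))"

datatype node = Src | InN nat "nat \<times> nat" | OutN nat "nat \<times> nat" | DC

text \<open>Capacity of the edge u -> v in the information flow graph (0 = no edge);
  t0 is the time of the data collector and D its set of servers.\<close>
fun ifg_cap :: "nat \<Rightarrow> nat \<Rightarrow> real \<Rightarrow> real \<Rightarrow> ((nat \<times> nat) \<times> nat) list \<Rightarrow> nat
                 \<Rightarrow> (nat \<times> nat) set \<Rightarrow> node \<Rightarrow> node \<Rightarrow> ereal" where
  "ifg_cap n s a b fs t0 D Src (InN t x) =
     (if t = 0 \<and> x \<in> servers n s then \<infinity> else 0)"
| "ifg_cap n s a b fs t0 D (InN t x) (OutN t' x') =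
     (if t' = t \<and> x' = x \<and> x \<in> servers n s \<and> t \<le> length fs then ereal a else 0)"
| "ifg_cap n s a b fs t0 D (OutN t x) (InN t' y) =
     (if t' = Suc t \<and> t < length fs \<and> x \<in> servers n s \<and> y \<in> servers n s then
        (if y = fst (fs ! t) then (if fst x = snd (fs ! t) then ereal b else 0)
         else if x = y then \<infinity> else 0)
      else 0)"
| "ifg_cap n s a b fs t0 D (OutN t x) DC = (if t = t0 \<and> x \<in> D then \<infinity> else 0)"
| "ifg_cap n s a b fs t0 D _ _ = 0"

definition ifg_nodes :: "nat \<Rightarrow> nat \<Rightarrow> ((nat \<times> nat) \<times> nat) list \<Rightarrow> node set" where
  "ifg_nodes n s fs = {Src, DC} \<union> {InN t x | t x. t \<le> length fs \<and> x \<in> servers n s}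
                                 \<union> {OutN t x | t x. t \<le> length fs \<and> x \<in> servers n s}"

definition cut_value :: "(node \<Rightarrow> node \<Rightarrow> ereal) \<Rightarrow> node set \<Rightarrow> node set \<Rightarrow> ereal" where
  "cut_value c V S = (\<Sum>(u, v) \<in> S \<times> (V - S). c u v)"

definition min_cut :: "nat \<Rightarrow> nat \<Rightarrow> real \<Rightarrow> real \<Rightarrow> ((nat \<times> nat) \<times> nat) list \<Rightarrow> nat
                       \<Rightarrow> (nat \<times> nat) set \<Rightarrow> ereal" where
  "min_cut n s a b fs t0 D =
     (INF S \<in> {S. S \<subseteq> ifg_nodes n s fs \<and> Src \<in> S \<and> DC \<notin> S}.
        cut_value (ifg_cap n s a b fs t0 D) (ifg_nodes n s fs) S)"

definition Fstar :: "nat \<Rightarrow> nat \<Rightarrow> nat \<Rightarrow> real \<Rightarrow> real \<Rightarrow> ereal" where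
  "Fstar n k s a b =
     (INF (fs, t0, D) \<in> {(fs, t0, D). valid_seq n s fs \<and> t0 \<le> length fs
                                      \<and> D \<subseteq> servers n s \<and> card D = k}.
        min_cut n s a b fs t0 D)"

end

theory Submission imports Defs begin

lemma graph_bound_aux:
  fixes Par :: "'v \<Rightarrow> 'v set" and f :: "nat \<Rightarrow> nat" and V0 :: "'v set"
  assumes irr: "\<And>u. u \<notin> Par u"
      and asym: "\<And>u v. u \<in> Par v \<Longrightarrow> v \<notin> Par u"
      and tri: "\<And>u v w. u \<in> V0 \<Longrightarrow> v \<in> V0 \<Longrightarrow> w \<in> V0 \<Longrightarrow>
                 (u \<in> Par v \<or> v \<in> Par u) \<Longrightarrow> (v \<in> Par w \<or> w \<in> Par v) \<Longrightarrow>
                 (u \<in> Par w \<or> w \<in> Par u) \<Longrightarrow> False"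
      and R1: "\<And>q. 1 \<le> q \<Longrightarrow> f (q-1) + p \<le> f q"
      and R2: "\<And>q. 2 \<le> q \<Longrightarrow> f (q-2) + (p+q) - 1 \<le> f q"
  shows "\<forall>V Q. card Q = m \<longrightarrow> finite V \<longrightarrow> V \<subseteq> V0 \<longrightarrow> Q \<subseteq> V \<longrightarrow> card (V - Q) = p \<longrightarrow>
         (\<Sum>w\<in>Q. card (Par w \<inter> V)) \<le> f m"
proof (induction m rule: less_induct)
  case (less m)
  have IH: "\<And>V Q. card Q < m \<Longrightarrow> finite V \<Longrightarrow> V \<subseteq> V0 \<Longrightarrow> Q \<subseteq> V \<Longrightarrow> card (V - Q) = p \<Longrightarrow>
      (\<Sum>w\<in>Q. card (Par w \<inter> V)) \<le> f (card Q)"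
    using less.IH by blast
  show ?case
  proof (intro allI impI)
  fix V Q assume cQm: "card Q = m" and finV: "finite V" and VV0: "V \<subseteq> V0" and QV: "Q \<subseteq> V"
    and cP: "card (V - Q) = p"
  have finQ: "finite Q" using finV QV finite_subset by blast
  show "(\<Sum>w\<in>Q. card (Par w \<inter> V)) \<le> f m"
  proof (cases "Q = {}")
    case True then show ?thesis using cQm by simp
  next
    case Qne: False
    show ?thesis
    proof (cases "\<exists>v\<in>Q. \<forall>w\<in>Q. v \<notin> Par w \<and> w \<notin> Par v")
      case True
      then obtain v where vQ: "v \<in> Q" and iso: "\<forall>w\<in>Q. v \<notin> Par w \<and> w \<notin> Par v" by blast
      define V' where "V' = V - {v}"
      define Q' where "Q' = Q - {v}"
      have cQ': "card Q' = card Q - 1" using vQ finQ by (simp add: Q'_def)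
      have cQ1: "1 \<le> card Q" using vQ finQ card_0_eq by fastforce
      have a1: "card Q' < m" using cQ' cQ1 cQm by simp
      have a2: "finite V'" using finV by (simp add: V'_def)
      have a3: "V' \<subseteq> V0" using VV0 by (auto simp: V'_def)
      have a4: "Q' \<subseteq> V'" using QV by (auto simp: V'_def Q'_def)
      have "V' - Q' = V - Q" using vQ by (auto simp: V'_def Q'_def)
      then have a5: "card (V' - Q') = p" using cP by simp
      have IH1: "(\<Sum>w\<in>Q'. card (Par w \<inter> V')) \<le> f (card Q')" by (rule IH[OF a1 a2 a3 a4 a5])
      have eq1: "(\<Sum>w\<in>Q. card (Par w \<inter> V)) = card (Par v \<inter> V) + (\<Sum>w\<in>Q'. card (Par w \<inter> V))"
        using vQ finQ by (simp add: Q'_def sum.remove)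
      have eq2: "(\<Sum>w\<in>Q'. card (Par w \<inter> V)) = (\<Sum>w\<in>Q'. card (Par w \<inter> V'))"
      proof (rule sum.cong)
        fix w assume "w \<in> Q'"
        then have "v \<notin> Par w" using iso Q'_def by auto
        then have "Par w \<inter> V = Par w \<inter> V'" by (auto simp: V'_def)
        then show "card (Par w \<inter> V) = card (Par w \<inter> V')" by simp
      qed simp
      have "Par v \<inter> V \<subseteq> V - Q" using iso by auto
      then have le1: "card (Par v \<inter> V) \<le> p" using cP finV by (metis card_mono finite_Diff)
      have fe: "f (card Q') = f (m - 1)" using cQ' cQm by simp
      have "(\<Sum>w\<in>Q. card (Par w \<inter> V)) \<le> p + f (m - 1)"
        using eq1 eq2 IH1 le1 fe by linarith
      also have "\<dots> \<le> f m" using R1[of m] cQ1 cQm by simp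
      finally show ?thesis .
    next
      case False
      then obtain a b where aQ: "a \<in> Q" and bQ: "b \<in> Q" and ab: "a \<in> Par b"
        using Qne by blast
      have anb: "a \<noteq> b" using ab irr by blast
      have ba: "b \<notin> Par a" using asym ab by blast
      define V'' where "V'' = V - {a, b}"
      define Q'' where "Q'' = Q - {a, b}"
      have sub2: "{a, b} \<subseteq> Q" using aQ bQ by auto
      have cQ'': "card Q'' = card Q - 2" using anb finQ sub2 by (simp add: Q''_def card_Diff_subset)
      have cQ2: "2 \<le> card Q"
      proof -
        have "card {a,b} \<le> card Q" using sub2 finQ card_mono by blast
        then show ?thesis using anb by simp
      qed
      have a1: "card Q'' < m" using cQ'' cQ2 cQm by simp
      have a2: "finite V''" using finV by (simp add: V''_def)
      have a3: "V'' \<subseteq> V0" using VV0 by (auto simp: V''_def)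
      have a4: "Q'' \<subseteq> V''" using QV by (auto simp: V''_def Q''_def)
      have "V'' - Q'' = V - Q" using aQ bQ by (auto simp: V''_def Q''_def)
      then have a5: "card (V'' - Q'') = p" using cP by simp
      have IH2: "(\<Sum>w\<in>Q''. card (Par w \<inter> V'')) \<le> f (card Q'')" by (rule IH[OF a1 a2 a3 a4 a5])
      have eq1: "(\<Sum>w\<in>Q. card (Par w \<inter> V)) = card (Par a \<inter> V) + card (Par b \<inter> V) + (\<Sum>w\<in>Q''. card (Par w \<inter> V))"
      proof -
        have "(\<Sum>w\<in>Q. card (Par w \<inter> V)) = card (Par a \<inter> V) + (\<Sum>w\<in>Q - {a}. card (Par w \<inter> V))"
          by (rule sum.remove[OF finQ aQ])
        moreover have "(\<Sum>w\<in>Q - {a}. card (Par w \<inter> V)) = card (Par b \<inter> V) + (\<Sum>w\<in>Q - {a} - {b}. card (Par w \<inter> V))"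
          using bQ anb finQ sum.remove[of "Q - {a}" b] by auto
        moreover have "Q - {a} - {b} = Q''" by (auto simp: Q''_def)
        ultimately show ?thesis by simp
      qed
      define Cha where "Cha = {w\<in>Q''. a \<in> Par w}"
      define Chb where "Chb = {w\<in>Q''. b \<in> Par w}"
      have finQ'': "finite Q''" using finQ by (simp add: Q''_def)
      have le2: "(\<Sum>w\<in>Q''. card (Par w \<inter> V)) \<le> (\<Sum>w\<in>Q''. card (Par w \<inter> V'')) + card Cha + card Chb"
      proof -
        have "(\<Sum>w\<in>Q''. card (Par w \<inter> V)) \<le> (\<Sum>w\<in>Q''. card (Par w \<inter> V'') + (if a \<in> Par w then 1 else 0) + (if b \<in> Par w then 1 else 0))"
        proof (rule sum_mono)
          fix w assume "w \<in> Q''"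
          have sub: "Par w \<inter> V \<subseteq> (Par w \<inter> V'') \<union> (Par w \<inter> {a}) \<union> (Par w \<inter> {b})"
            by (auto simp: V''_def)
          have fin: "finite (Par w \<inter> V'')" using finV by (simp add: V''_def)
          have "card (Par w \<inter> V) \<le> card ((Par w \<inter> V'') \<union> (Par w \<inter> {a}) \<union> (Par w \<inter> {b}))"
            using sub fin by (intro card_mono) auto
          also have "\<dots> \<le> card (Par w \<inter> V'') + card (Par w \<inter> {a}) + card (Par w \<inter> {b})"
            by (metis (no_types, lifting) add_le_mono card_Un_le dual_order.trans le_refl)
          also have "card (Par w \<inter> {a}) = (if a \<in> Par w then 1 else 0)" by auto
          also have "card (Par w \<inter> {b}) = (if b \<in> Par w then 1 else 0)" by auto
          finally show "card (Par w \<inter> V) \<le> card (Par w \<inter> V'') + (if a \<in> Par w then 1 else 0) + (if b \<in> Par w then 1 else 0)" .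
        qed
        also have "\<dots> = (\<Sum>w\<in>Q''. card (Par w \<inter> V'')) + (\<Sum>w\<in>Q''. (if a \<in> Par w then 1 else 0)) + (\<Sum>w\<in>Q''. (if b \<in> Par w then 1 else 0))"
          by (simp add: sum.distrib)
        also have "(\<Sum>w\<in>Q''. (if a \<in> Par w then 1 else 0)) = card Cha"
          unfolding Cha_def using sum.inter_filter[OF finQ'', of "\<lambda>_. 1::nat" "\<lambda>w. a \<in> Par w"] by simp
        also have "(\<Sum>w\<in>Q''. (if b \<in> Par w then 1 else 0)) = card Chb"
          unfolding Chb_def using sum.inter_filter[OF finQ'', of "\<lambda>_. 1::nat" "\<lambda>w. b \<in> Par w"] by simp
        finally show ?thesis .
      qed
      define Na where "Na = (Par a \<inter> V) \<union> Cha"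
      define Nb where "Nb = (Par b \<inter> V) \<union> Chb"
      have finNa: "finite Na" "finite Nb" using finV finQ'' by (auto simp: Na_def Nb_def Cha_def Chb_def)
      have dja: "(Par a \<inter> V) \<inter> Cha = {}" using asym by (auto simp: Cha_def)
      have djb: "(Par b \<inter> V) \<inter> Chb = {}" using asym by (auto simp: Chb_def)
      have cNa: "card Na = card (Par a \<inter> V) + card Cha"
        unfolding Na_def using finV finQ'' dja by (intro card_Un_disjoint) (auto simp: Cha_def)
      have cNb: "card Nb = card (Par b \<inter> V) + card Chb"
        unfolding Nb_def using finV finQ'' djb by (intro card_Un_disjoint) (auto simp: Chb_def)
      have aV0: "a \<in> V0" and bV0: "b \<in> V0" using aQ bQ QV VV0 by auto
      have NaV: "Na \<subseteq> V" and NbV: "Nb \<subseteq> V" using QV by (auto simp: Na_def Nb_def Cha_def Chb_def Q''_def)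
      have disj: "Na \<inter> Nb = {}"
      proof (rule ccontr)
        assume "Na \<inter> Nb \<noteq> {}"
        then obtain w where wa: "w \<in> Na" and wb: "w \<in> Nb" by blast
        have wV0: "w \<in> V0" using wa NaV VV0 by auto
        have "w \<in> Par a \<or> a \<in> Par w" using wa by (auto simp: Na_def Cha_def)
        moreover have "w \<in> Par b \<or> b \<in> Par w" using wb by (auto simp: Nb_def Chb_def)
        ultimately show False using tri[OF aV0 bV0 wV0] ab by blast
      qed
      have "b \<notin> Na" using ba by (auto simp: Na_def Cha_def Q''_def)
      moreover have "b \<notin> Nb" using irr by (auto simp: Nb_def Chb_def Q''_def)
      ultimately have "Na \<union> Nb \<subseteq> V - {b}" using NaV NbV by auto
      then have "card (Na \<union> Nb) \<le> card (V - {b})" using finV by (intro card_mono) auto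
      moreover have "card (V - {b}) = card V - 1" using bQ QV finV by auto
      moreover have "card (Na \<union> Nb) = card Na + card Nb" using disj finNa card_Un_disjoint by blast
      moreover have "card V = p + card Q" using cP QV finV
        by (metis card_Diff_subset card_mono finite_subset le_add_diff_inverse2)
      ultimately have le3: "card Na + card Nb \<le> p + card Q - 1" by linarith
      have fe: "f (card Q'') = f (m - 2)" using cQ'' cQm by simp
      have "(\<Sum>w\<in>Q. card (Par w \<inter> V)) \<le> f (m - 2) + (p + m - 1)"
        using eq1 le2 IH2 fe cNa cNb le3 cQ2 cQm by linarith
      also have "\<dots> \<le> f m" using R2[of m] cQ2 cQm by simp
      finally show ?thesis .
    qed
  qed
  qed
qed

lemma graph_bound:
  fixes Par :: "'v \<Rightarrow> 'v set" and f :: "nat \<Rightarrow> nat" and V0 :: "'v set"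
  assumes irr: "\<And>u. u \<notin> Par u"
      and asym: "\<And>u v. u \<in> Par v \<Longrightarrow> v \<notin> Par u"
      and tri: "\<And>u v w. u \<in> V0 \<Longrightarrow> v \<in> V0 \<Longrightarrow> w \<in> V0 \<Longrightarrow>
                 (u \<in> Par v \<or> v \<in> Par u) \<Longrightarrow> (v \<in> Par w \<or> w \<in> Par v) \<Longrightarrow>
                 (u \<in> Par w \<or> w \<in> Par u) \<Longrightarrow> False"
      and R1: "\<And>q. 1 \<le> q \<Longrightarrow> f (q-1) + p \<le> f q"
      and R2: "\<And>q. 2 \<le> q \<Longrightarrow> f (q-2) + (p+q) - 1 \<le> f q"
  shows "finite V \<Longrightarrow> V \<subseteq> V0 \<Longrightarrow> Q \<subseteq> V \<Longrightarrow> card (V - Q) = p \<Longrightarrow>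
         (\<Sum>w\<in>Q. card (Par w \<inter> V)) \<le> f (card Q)"
proof -
  assume h: "finite V" "V \<subseteq> V0" "Q \<subseteq> V" "card (V - Q) = p"
  have A: "\<forall>V Q'. card Q' = card Q \<longrightarrow> finite V \<longrightarrow> V \<subseteq> V0 \<longrightarrow> Q' \<subseteq> V \<longrightarrow> card (V - Q') = p \<longrightarrow>
         (\<Sum>w\<in>Q'. card (Par w \<inter> V)) \<le> f (card Q)"
    by (rule graph_bound_aux[OF irr asym tri R1 R2])
  note B = spec[where x=Q, OF spec[where x=V, OF A]]
  show "(\<Sum>w\<in>Q. card (Par w \<inter> V)) \<le> f (card Q)" using B h by simp
qed

lemma choose_prefix:
  fixes E :: "'a set" and \<tau> :: "'a \<Rightarrow> nat"
  assumes "finite E"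
  shows "k \<le> card E \<Longrightarrow> \<exists>K\<subseteq>E. card K = k \<and> (\<forall>e\<in>K. \<forall>e'\<in>E. \<tau> e' < \<tau> e \<longrightarrow> e' \<in> K)"
proof (induction k)
  case 0 then show ?case by (intro exI[of _ "{}"]) auto
next
  case (Suc k)
  then obtain K where KE: "K \<subseteq> E" and cK: "card K = k" and cl: "\<forall>e\<in>K. \<forall>e'\<in>E. \<tau> e' < \<tau> e \<longrightarrow> e' \<in> K"
    by auto
  have finK: "finite K" using KE assms finite_subset by blast
  have "E - K \<noteq> {}"
  proof
    assume "E - K = {}" then have "E = K" using KE by auto
    then show False using cK Suc.prems by simp
  qed
  define m where "m = Min (\<tau> ` (E - K))"
  have "m \<in> \<tau> ` (E - K)" unfolding m_def using \<open>E - K \<noteq> {}\<close> assms by (intro Min_in) auto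
  then obtain e where eEK: "e \<in> E - K" and em: "\<tau> e = m" by auto
  have emin: "\<forall>e'\<in>E - K. \<tau> e \<le> \<tau> e'" using em assms unfolding m_def by (auto intro: Min_le)
  show ?case
  proof (intro exI[of _ "insert e K"] conjI)
    show "insert e K \<subseteq> E" using KE eEK by auto
    show "card (insert e K) = Suc k" using cK finK eEK by simp
    show "\<forall>e''\<in>insert e K. \<forall>e'\<in>E. \<tau> e' < \<tau> e'' \<longrightarrow> e' \<in> insert e K"
      using cl emin by (metis Diff_iff insertCI insertE leD)
  qed
qed

definition fA :: "nat \<Rightarrow> nat \<Rightarrow> nat" where
  "fA p q = (if q \<le> p + 1 then p * q else p * q + q * q)"

lemma fA_R1: assumes "1 \<le> q" shows "fA p (q - 1) + p \<le> fA p q"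
proof -
  obtain m where q: "q = m + 1" using assms by (metis le_add_diff_inverse2)
  have a: "fA p m \<le> p * m + m * m" by (simp add: fA_def)
  show ?thesis
  proof (cases "m + 1 \<le> p + 1")
    case True
    then have "fA p m = p * m" "fA p (m + 1) = p * (m + 1)" by (auto simp: fA_def)
    then show ?thesis using q by (simp add: algebra_simps)
  next
    case False
    then have b: "fA p (m + 1) = p * (m + 1) + (m + 1) * (m + 1)" by (simp add: fA_def)
    have "p * m + m * m + p \<le> p * (m + 1) + (m + 1) * (m + 1)" by (simp add: algebra_simps)
    then show ?thesis using a b q by simp
  qed
qed

lemma fA_R2: assumes "2 \<le> q" shows "fA p (q - 2) + (p + q) - 1 \<le> fA p q"
proof -
  obtain m where q: "q = m + 2" using assms by (metis le_add_diff_inverse2)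
  have a: "fA p m \<le> p * m + m * m" by (simp add: fA_def)
  show ?thesis
  proof (cases "m + 2 \<le> p + 1")
    case True
    then have "fA p m = p * m" "fA p (m + 2) = p * (m + 2)" by (auto simp: fA_def)
    then show ?thesis using q True by (simp add: algebra_simps)
  next
    case False
    then have b: "fA p (m + 2) = p * (m + 2) + (m + 2) * (m + 2)" by (simp add: fA_def)
    have "p * m + m * m + (p + (m + 2)) - 1 \<le> p * (m + 2) + (m + 2) * (m + 2)" by (simp add: algebra_simps)
    then show ?thesis using a b q by simp
  qed
qed

lemma mantel_R1: fixes q :: nat assumes "1 \<le> q" shows "(q - 1) * (q - 1) div 4 + 0 \<le> q * q div 4"
proof -
  have "(q - 1) * (q - 1) \<le> q * q" by (intro mult_le_mono) auto
  then show ?thesis by (simp add: div_le_mono)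
qed

lemma mantel_R2: fixes q :: nat assumes "2 \<le> q" shows "(q - 2) * (q - 2) div 4 + (0 + q) - 1 \<le> q * q div 4"
proof -
  obtain m where q: "q = m + 2" using assms by (metis le_add_diff_inverse2)
  have "(m + 2) * (m + 2) = m * m + (m + 1) * 4" by (simp add: algebra_simps)
  then have "(m + 2) * (m + 2) div 4 = m * m div 4 + (m + 1)" by simp
  then show ?thesis using q by simp
qed

locale lbloc =
  fixes X :: "(nat \<times> nat) set" and d L t0 :: nat and D :: "(nat \<times> nat) set"
    and y :: "nat \<Rightarrow> nat \<times> nat" and g :: "nat \<Rightarrow> nat"
    and ob ib :: "nat \<Rightarrow> nat \<times> nat \<Rightarrow> bool"
  assumes finX: "finite X"
    and yX: "\<And>t. t < L \<Longrightarrow> y t \<in> X"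
    and gy: "\<And>t. t < L \<Longrightarrow> g t \<noteq> fst (y t)"
    and cl: "\<And>t. t < L \<Longrightarrow> card {z\<in>X. fst z = g t} = d"
    and DX: "D \<subseteq> X" and t0L: "t0 \<le> L"
    and H1: "\<And>x. x \<in> D \<Longrightarrow> ob t0 x"
    and H2: "\<And>x. x \<in> X \<Longrightarrow> \<not> ib 0 x"
    and H3: "\<And>t x. t < L \<Longrightarrow> x \<in> X \<Longrightarrow> x \<noteq> y t \<Longrightarrow> ib (Suc t) x \<Longrightarrow> ob t x"
begin

definition ev :: "nat \<Rightarrow> nat \<times> nat \<Rightarrow> bool" where
  "ev t x \<longleftrightarrow> t \<le> L \<and> x \<in> X \<and> ob t x \<and> (\<not> ib t x \<or> (0 < t \<and> x = y (t - 1)))"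

definition EV :: "(nat \<times> (nat \<times> nat)) set" where "EV = {(t, x). ev t x}"

fun rt :: "nat \<Rightarrow> nat \<times> nat \<Rightarrow> nat" where
  "rt 0 x = 0"
| "rt (Suc t) x = (if ev (Suc t) x then Suc t else rt t x)"

lemma rt_ev: "t \<le> L \<Longrightarrow> x \<in> X \<Longrightarrow> ob t x \<Longrightarrow> ev (rt t x) x \<and> rt t x \<le> t"
proof (induction t)
  case 0 then show ?case using H2 by (simp add: ev_def)
next
  case (Suc t)
  show ?case
  proof (cases "ev (Suc t) x")
    case True then show ?thesis by simp
  next
    case False
    then have "ib (Suc t) x" "x \<noteq> y t" using Suc.prems by (auto simp: ev_def)
    then have "ob t x" using H3 Suc.prems by auto
    then have "ev (rt t x) x \<and> rt t x \<le> t" using Suc by auto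
    then show ?thesis using False by simp
  qed
qed

lemma finEV: "finite EV"
  by (rule finite_subset[of _ "{..L} \<times> X"]) (auto simp: EV_def ev_def finX)

lemma card_EV: "card D \<le> card EV"
proof -
  have sub: "(\<lambda>x. (rt t0 x, x)) ` D \<subseteq> EV" using rt_ev[of t0] t0L DX H1 by (auto simp: EV_def)
  have "inj_on (\<lambda>x. (rt t0 x, x)) D" by (auto intro: inj_onI)
  then have "card D = card ((\<lambda>x. (rt t0 x, x)) ` D)" by (simp add: card_image)
  also have "\<dots> \<le> card EV" using sub finEV card_mono by blast
  finally show ?thesis .
qed

definition par :: "nat \<times> (nat \<times> nat) \<Rightarrow> (nat \<times> (nat \<times> nat)) set" where
  "par e = (if ev (fst e) (snd e) \<and> ib (fst e) (snd e)
            then (\<lambda>z. (rt (fst e - 1) z, z)) ` {z \<in> X. fst z = g (fst e - 1) \<and> ob (fst e - 1) z}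
            else {})"

lemma par_props:
  assumes "u \<in> par e"
  shows "u \<in> EV" "fst u < fst e" "fst (snd u) = g (fst e - 1)" "fst (snd e) \<noteq> g (fst e - 1)"
proof -
  obtain t x where e: "e = (t, x)" by (cases e)
  have evt: "ev t x" and ibt: "ib t x" using assms e by (auto simp: par_def split: if_splits)
  then have t0: "0 < t" and xy: "x = y (t - 1)" and tL: "t \<le> L" by (auto simp: ev_def)
  obtain z where u: "u = (rt (t - 1) z, z)" and zX: "z \<in> X" and zg: "fst z = g (t - 1)" and zo: "ob (t - 1) z"
    using assms e evt ibt by (auto simp: par_def)
  have "ev (rt (t - 1) z) z \<and> rt (t - 1) z \<le> t - 1" using rt_ev[of "t - 1" z] tL zX zo by auto
  then show "u \<in> EV" "fst u < fst e" using u e t0 by (auto simp: EV_def)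
  show "fst (snd u) = g (fst e - 1)" using u zg e by simp
  have "t - 1 < L" using t0 tL by simp
  then show "fst (snd e) \<noteq> g (fst e - 1)" using gy[of "t - 1"] xy e by simp
qed

lemma card_par: "ev t x \<Longrightarrow> ib t x \<Longrightarrow>
   card (par (t, x)) = card {z \<in> X. fst z = g (t - 1) \<and> ob (t - 1) z}"
  unfolding par_def by (auto intro!: card_image inj_onI)

lemma par_irr: "u \<notin> par u" by (meson par_props(2) less_irrefl)

lemma par_asym: "u \<in> par v \<Longrightarrow> v \<notin> par u" by (meson par_props(2) less_asym)

lemma par_key: "u \<in> par v \<Longrightarrow> u \<in> par w \<Longrightarrow> v \<in> par w \<Longrightarrow> False"
  using par_props(3,4) by metis

lemma par_tri: "(u \<in> par v \<or> v \<in> par u) \<Longrightarrow> (v \<in> par w \<or> w \<in> par v) \<Longrightarrow>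
                 (u \<in> par w \<or> w \<in> par u) \<Longrightarrow> False"
proof -
  have cyc: "\<And>a b c. a \<in> par b \<Longrightarrow> b \<in> par c \<Longrightarrow> c \<in> par a \<Longrightarrow> False"
    using par_props(2) by (meson less_asym less_trans)
  assume "u \<in> par v \<or> v \<in> par u" "v \<in> par w \<or> w \<in> par v" "u \<in> par w \<or> w \<in> par u"
  then show False using cyc par_key by metis
qed

definition cost :: "real \<Rightarrow> real \<Rightarrow> nat \<times> (nat \<times> nat) \<Rightarrow> real" where
  "cost \<alpha> \<beta> e = (if ib (fst e) (snd e)
      then \<beta> * real (card {z \<in> X. fst z = g (fst e - 1) \<and> \<not> ob (fst e - 1) z}) else \<alpha>)"

lemma cost_rev:
  assumes "ev t x" "ib t x"
  shows "cost \<alpha> \<beta> (t, x) = \<beta> * (real d - real (card (par (t, x))))"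
proof -
  have t0: "0 < t" and tL: "t \<le> L" using assms by (auto simp: ev_def)
  then have tL': "t - 1 < L" by simp
  let ?A = "{z \<in> X. fst z = g (t - 1) \<and> ob (t - 1) z}"
  let ?B = "{z \<in> X. fst z = g (t - 1) \<and> \<not> ob (t - 1) z}"
  have u: "?A \<union> ?B = {z \<in> X. fst z = g (t - 1)}" by auto
  have i: "?A \<inter> ?B = {}" by auto
  have f: "finite ?A" "finite ?B" using finX by auto
  have "card (?A \<union> ?B) = card ?A + card ?B" using f i by (rule card_Un_disjoint)
  then have "card ?A + card ?B = d" using u cl[OF tL'] by simp
  then have "real (card ?B) = real d - real (card ?A)" by linarith
  then show ?thesis using assms card_par[OF assms] by (simp add: cost_def)
qed

lemma cost_nonneg: "0 < \<alpha> \<Longrightarrow> 0 < \<beta> \<Longrightarrow> 0 \<le> cost \<alpha> \<beta> e"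
  by (simp add: cost_def)

theorem lb_main:
  assumes a0: "0 < \<alpha>" and b0: "0 < \<beta>"
  shows "\<exists>p q H. p + q = card D \<and> 4 * H \<le> (p + q) * (p + q) \<and> (q \<le> p \<longrightarrow> H \<le> p * q) \<and>
          real p * \<alpha> + \<beta> * (real q * real d - real H) \<le> (\<Sum>e\<in>EV. cost \<alpha> \<beta> e)"
proof -
  define k where "k = card D"
  obtain K where KE: "K \<subseteq> EV" and cK: "card K = k" and clo: "\<forall>e\<in>K. \<forall>e'\<in>EV. fst e' < fst e \<longrightarrow> e' \<in> K"
    using choose_prefix[OF finEV, of k fst] card_EV k_def by auto
  have finK: "finite K" using KE finEV finite_subset by blast
  have parK: "\<And>e. e \<in> K \<Longrightarrow> par e \<subseteq> K"
    using clo par_props(1,2) by blast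
  define P where "P = {e \<in> K. \<alpha> < \<beta> * (real d - real (card (par e)))}"
  define Qs where "Qs = K - P"
  define H where "H = (\<Sum>e\<in>Qs. card (par e))"
  have PK: "P \<subseteq> K" by (auto simp: P_def)
  have finP: "finite P" using finK PK finite_subset by blast
  have finQ: "finite Qs" using finK by (simp add: Qs_def)
  have cPQ: "card P + card Qs = k"
  proof -
    have "card (K - P) = card K - card P" using finP PK by (rule card_Diff_subset)
    moreover have "card P \<le> card K" by (rule card_mono[OF finK PK])
    ultimately show ?thesis using cK by (simp add: Qs_def)
  qed
  have ev_of: "\<And>e. e \<in> K \<Longrightarrow> ev (fst e) (snd e)" using KE by (auto simp: EV_def)
  have step1: "(\<Sum>e\<in>K. cost \<alpha> \<beta> e) \<le> (\<Sum>e\<in>EV. cost \<alpha> \<beta> e)"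
    using KE finEV cost_nonneg[OF a0 b0] by (intro sum_mono2) auto
  have split: "(\<Sum>e\<in>K. cost \<alpha> \<beta> e) = (\<Sum>e\<in>P. cost \<alpha> \<beta> e) + (\<Sum>e\<in>Qs. cost \<alpha> \<beta> e)"
    using PK finK unfolding Qs_def by (simp add: sum.subset_diff)
  have sP: "real (card P) * \<alpha> \<le> (\<Sum>e\<in>P. cost \<alpha> \<beta> e)"
  proof -
    have "(\<Sum>e\<in>P. \<alpha>) \<le> (\<Sum>e\<in>P. cost \<alpha> \<beta> e)"
    proof (rule sum_mono)
      fix e assume eP: "e \<in> P"
      obtain t x where e: "e = (t, x)" by (cases e)
      have "ev t x" using ev_of eP PK e by fastforce
      show "\<alpha> \<le> cost \<alpha> \<beta> e"
      proof (cases "ib t x")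
        case True
        then show ?thesis using cost_rev[OF \<open>ev t x\<close> True] eP e by (simp add: P_def)
      next
        case False then show ?thesis using e by (simp add: cost_def)
      qed
    qed
    then show ?thesis by simp
  qed
  have sQ: "\<beta> * (real (card Qs) * real d - real H) \<le> (\<Sum>e\<in>Qs. cost \<alpha> \<beta> e)"
  proof -
    have "(\<Sum>e\<in>Qs. \<beta> * (real d - real (card (par e)))) \<le> (\<Sum>e\<in>Qs. cost \<alpha> \<beta> e)"
    proof (rule sum_mono)
      fix e assume eQ: "e \<in> Qs"
      obtain t x where e: "e = (t, x)" by (cases e)
      have "ev t x" using ev_of eQ e by (fastforce simp: Qs_def)
      show "\<beta> * (real d - real (card (par e))) \<le> cost \<alpha> \<beta> e"
      proof (cases "ib t x")
        case True
        then show ?thesis using cost_rev[OF \<open>ev t x\<close> True] e by simp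
      next
        case False
        then have "par e = {}" using e by (simp add: par_def)
        moreover have "\<not> \<alpha> < \<beta> * (real d - real (card (par e)))" using eQ by (auto simp: Qs_def P_def)
        ultimately show ?thesis using False e by (simp add: cost_def)
      qed
    qed
    moreover have "(\<Sum>e\<in>Qs. \<beta> * (real d - real (card (par e)))) = \<beta> * (real (card Qs) * real d - real H)"
      by (simp add: H_def sum_distrib_left[symmetric] sum_subtractf of_nat_sum)
    ultimately show ?thesis by simp
  qed
  have irr: "\<And>u. u \<notin> par u" by (rule par_irr)
  have asy: "\<And>u v. u \<in> par v \<Longrightarrow> v \<notin> par u" by (rule par_asym)
  have tri: "\<And>u v w. u \<in> K \<Longrightarrow> v \<in> K \<Longrightarrow> w \<in> K \<Longrightarrow>
                 (u \<in> par v \<or> v \<in> par u) \<Longrightarrow> (v \<in> par w \<or> w \<in> par v) \<Longrightarrow>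
                 (u \<in> par w \<or> w \<in> par u) \<Longrightarrow> False" using par_tri by blast
  have cardK: "\<And>w. w \<in> K \<Longrightarrow> card (par w \<inter> K) = card (par w)"
    using parK by (simp add: Int_absorb2)
  have mant: "(\<Sum>w\<in>K. card (par w \<inter> K)) \<le> card K * card K div 4"
  proof (rule graph_bound[where Par=par and V0=K and p=0 and f="\<lambda>q. q * q div 4"])
    show "\<And>u. u \<notin> par u" by (rule irr)
    show "\<And>u v. u \<in> par v \<Longrightarrow> v \<notin> par u" by (rule asy)
    show "\<And>u v w. u \<in> K \<Longrightarrow> v \<in> K \<Longrightarrow> w \<in> K \<Longrightarrow>
                 (u \<in> par v \<or> v \<in> par u) \<Longrightarrow> (v \<in> par w \<or> w \<in> par v) \<Longrightarrow>
                 (u \<in> par w \<or> w \<in> par u) \<Longrightarrow> False" by (rule tri)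
    show "\<And>q::nat. 1 \<le> q \<Longrightarrow> (q - 1) * (q - 1) div 4 + 0 \<le> q * q div 4" by (rule mantel_R1)
    show "\<And>q::nat. 2 \<le> q \<Longrightarrow> (q - 2) * (q - 2) div 4 + (0 + q) - 1 \<le> q * q div 4" by (rule mantel_R2)
    show "finite K" by (rule finK)
    show "K \<subseteq> K" by simp
    show "K \<subseteq> K" by simp
    show "card (K - K) = 0" by simp
  qed
  have "H \<le> (\<Sum>w\<in>K. card (par w))"
    unfolding H_def Qs_def using finK by (intro sum_mono2) auto
  also have "\<dots> = (\<Sum>w\<in>K. card (par w \<inter> K))" using cardK by simp
  finally have "H \<le> k * k div 4" using mant cK by simp
  then have H4: "4 * H \<le> k * k" by linarith
  have Hpq: "card Qs \<le> card P \<longrightarrow> H \<le> card P * card Qs"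
  proof
    assume le: "card Qs \<le> card P"
    have cKQ: "card (K - Qs) = card P" using PK by (simp add: Qs_def Diff_Diff_Int Int_absorb1)
    have "(\<Sum>w\<in>Qs. card (par w \<inter> K)) \<le> fA (card P) (card Qs)"
    proof (rule graph_bound[where Par=par and V0=K and p="card P" and f="fA (card P)"])
      show "\<And>u. u \<notin> par u" by (rule irr)
      show "\<And>u v. u \<in> par v \<Longrightarrow> v \<notin> par u" by (rule asy)
      show "\<And>u v w. u \<in> K \<Longrightarrow> v \<in> K \<Longrightarrow> w \<in> K \<Longrightarrow>
                 (u \<in> par v \<or> v \<in> par u) \<Longrightarrow> (v \<in> par w \<or> w \<in> par v) \<Longrightarrow>
                 (u \<in> par w \<or> w \<in> par u) \<Longrightarrow> False" by (rule tri)
      show "\<And>q. 1 \<le> q \<Longrightarrow> fA (card P) (q - 1) + card P \<le> fA (card P) q" by (rule fA_R1)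
      show "\<And>q. 2 \<le> q \<Longrightarrow> fA (card P) (q - 2) + (card P + q) - 1 \<le> fA (card P) q" by (rule fA_R2)
      show "finite K" by (rule finK)
      show "K \<subseteq> K" by simp
      show "Qs \<subseteq> K" by (auto simp: Qs_def)
      show "card (K - Qs) = card P" by (rule cKQ)
    qed
    moreover have "(\<Sum>w\<in>Qs. card (par w \<inter> K)) = H"
      unfolding H_def using cardK by (simp add: Qs_def)
    moreover have "fA (card P) (card Qs) = card P * card Qs" using le by (simp add: fA_def)
    ultimately show "H \<le> card P * card Qs" by simp
  qed
  show ?thesis
    apply (rule exI[of _ "card P"], rule exI[of _ "card Qs"], rule exI[of _ H])
    using cPQ H4 Hpq step1 split sP sQ k_def by simp
qed


end

lemma sq4: "(k::nat) * k div 4 = (k div 2) * ((k + 1) div 2)"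
proof -
  define m where "m = k div 2"
  have "k = 2 * m \<or> k = 2 * m + 1" unfolding m_def by presburger
  then show ?thesis
  proof
    assume k: "k = 2 * m"
    have "k * k = (m * m) * 4" using k by (simp add: algebra_simps)
    then show ?thesis using k by simp
  next
    assume k: "k = 2 * m + 1"
    have "k * k = 1 + (m * m + m) * 4" using k by (simp add: algebra_simps)
    then have "k * k div 4 = m * m + m" by simp
    moreover have "k div 2 = m" "(k + 1) div 2 = m + 1" using k by simp_all
    ultimately show ?thesis by (simp add: algebra_simps)
  qed
qed

definition gg :: "real \<Rightarrow> real \<Rightarrow> nat \<Rightarrow> nat \<Rightarrow> nat \<Rightarrow> real" where
  "gg \<alpha> \<beta> d k p = real p * \<alpha> + (real d - real p) * (real k - real p) * \<beta>"

lemma g_cmp: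
  fixes \<alpha> \<beta> :: real and p k1 k d :: nat
  assumes L1: "p < k1 \<Longrightarrow> \<alpha> \<le> \<beta> * (real d + real k - real p - real k1)"
      and L2: "k1 < p \<Longrightarrow> \<beta> * (real d + real k - real p - real k1) \<le> \<alpha>"
  shows "gg \<alpha> \<beta> d k k1 \<le> gg \<alpha> \<beta> d k p"
proof -
  have eq: "gg \<alpha> \<beta> d k p - gg \<alpha> \<beta> d k k1 = (real p - real k1) * (\<alpha> - \<beta> * (real d + real k - real p - real k1))"
    unfolding gg_def by algebra
  have "0 \<le> (real p - real k1) * (\<alpha> - \<beta> * (real d + real k - real p - real k1))"
  proof (cases "p < k1")
    case True
    then show ?thesis using L1 by (intro mult_nonpos_nonpos) auto
  next
    case False
    then show ?thesis using L2 by (cases "p = k1") (auto intro!: mult_nonneg_nonneg)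
  qed
  then show ?thesis using eq by linarith
qed

lemma value_ge_gp:
  fixes \<alpha> \<beta> :: real and p q H k d :: nat
  assumes b0: "0 < \<beta>" and pq: "p + q = k" and H: "H \<le> p * q"
  shows "gg \<alpha> \<beta> d k p \<le> real p * \<alpha> + \<beta> * (real q * real d - real H)"
proof -
  have "real H \<le> real p * real q" using H by (metis of_nat_le_iff of_nat_mult)
  then have A: "\<beta> * real H \<le> \<beta> * (real p * real q)" using b0 by (intro mult_left_mono) auto
  have kq: "real k - real p = real q" using pq by auto
  have e1: "gg \<alpha> \<beta> d k p = real p * \<alpha> + \<beta> * (real q * real d) - \<beta> * (real p * real q)"
    unfolding gg_def kq by (simp add: algebra_simps)
  have e2: "real p * \<alpha> + \<beta> * (real q * real d - real H) = real p * \<alpha> + \<beta> * (real q * real d) - \<beta> * real H"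
    by (simp add: algebra_simps)
  show ?thesis using A e1 e2 by linarith
qed

lemma value_ge_ghc:
  fixes \<alpha> \<beta> :: real and p q H k d :: nat
  assumes b0: "0 < \<beta>" and pq: "p + q = k" and H: "H \<le> (k div 2) * ((k + 1) div 2)"
      and qp: "p < q" and ad: "\<alpha> \<le> real d * \<beta>"
  shows "gg \<alpha> \<beta> d k ((k + 1) div 2) \<le> real p * \<alpha> + \<beta> * (real q * real d - real H)"
proof -
  define hf where "hf = k div 2"
  define hc where "hc = (k + 1) div 2"
  have hfc: "hf + hc = k" unfolding hf_def hc_def by presburger
  have phc: "p \<le> hc" using qp pq unfolding hc_def by presburger
  have "real H \<le> real hf * real hc" using H unfolding hf_def hc_def by (metis of_nat_le_iff of_nat_mult)
  then have A: "\<beta> * real H \<le> \<beta> * (real hf * real hc)" using b0 by (intro mult_left_mono) auto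
  have B: "(real hc - real p) * \<alpha> \<le> (real hc - real p) * (real d * \<beta>)"
    using phc ad by (intro mult_left_mono) auto
  have kq: "real k - real hc = real hf" using hfc by auto
  have qq: "real q = real hf + (real hc - real p)" using hfc pq by auto
  have e1: "gg \<alpha> \<beta> d k hc = real hc * \<alpha> + \<beta> * (real hf * real d) - \<beta> * (real hf * real hc)"
    unfolding gg_def kq by (simp add: algebra_simps)
  have e2: "real p * \<alpha> + \<beta> * (real q * real d - real H) =
     real p * \<alpha> + \<beta> * (real hf * real d) + (real hc - real p) * (real d * \<beta>) - \<beta> * real H"
    unfolding qq by (simp add: algebra_simps)
  have e3: "real hc * \<alpha> = real p * \<alpha> + (real hc - real p) * \<alpha>" by (simp add: algebra_simps)
  show ?thesis using A B e1 e2 e3 unfolding hc_def[symmetric] by linarith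
qed

lemma final_arith:
  fixes \<alpha> \<beta> :: real and p q H k d :: nat
  assumes a0: "0 < \<alpha>" and b0: "0 < \<beta>" and pq: "p + q = k"
    and H4: "4 * H \<le> k * k" and Hpq: "q \<le> p \<longrightarrow> H \<le> p * q"
  shows "(real d \<le> \<alpha> / \<beta> \<longrightarrow> real k * real d * \<beta> - real (k div 2) * real ((k + 1) div 2) * \<beta>
            \<le> real p * \<alpha> + \<beta> * (real q * real d - real H))
    \<and> (\<forall>k1 \<in> {(k + 1) div 2..k}. real d + real k - 2 * real k1 - 1 \<le> \<alpha> / \<beta>
          \<and> \<alpha> / \<beta> < min (real d + real k - 2 * real k1 + 1) (real d) \<longrightarrow>
          real k1 * \<alpha> + (real d - real k1) * (real k - real k1) * \<beta>
            \<le> real p * \<alpha> + \<beta> * (real q * real d - real H))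
    \<and> (\<alpha> / \<beta> < real d - real k - 1 \<longrightarrow> real k * \<alpha> \<le> real p * \<alpha> + \<beta> * (real q * real d - real H))"
proof -
  define hf where "hf = k div 2"
  define hc where "hc = (k + 1) div 2"
  have Hh: "H \<le> hf * hc" using H4 sq4[of k] unfolding hf_def hc_def by linarith
  have hfc: "hf + hc = k" unfolding hf_def hc_def by presburger
  let ?v = "real p * \<alpha> + \<beta> * (real q * real d - real H)"
  have c1: "real d \<le> \<alpha> / \<beta> \<longrightarrow> real k * real d * \<beta> - real hf * real hc * \<beta> \<le> ?v"
  proof
    assume "real d \<le> \<alpha> / \<beta>"
    then have ad: "real d * \<beta> \<le> \<alpha>" using b0 by (simp add: pos_le_divide_eq)
    have A: "real p * (real d * \<beta>) \<le> real p * \<alpha>" using ad by (intro mult_left_mono) auto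
    have "real H \<le> real hf * real hc" using Hh by (metis of_nat_le_iff of_nat_mult)
    then have B: "\<beta> * real H \<le> \<beta> * (real hf * real hc)" using b0 by (intro mult_left_mono) auto
    have kk: "real k = real p + real q" using pq by auto
    have C: "real k * real d * \<beta> - real hf * real hc * \<beta> =
       real p * (real d * \<beta>) + \<beta> * (real q * real d) - \<beta> * (real hf * real hc)"
      unfolding kk by (simp add: algebra_simps)
    have D: "?v = real p * \<alpha> + \<beta> * (real q * real d) - \<beta> * real H" by (simp add: algebra_simps)
    show "real k * real d * \<beta> - real hf * real hc * \<beta> \<le> ?v" using A B C D by linarith
  qed
  have gen: "\<And>k1. hc \<le> k1 \<Longrightarrow> k1 \<le> k \<Longrightarrow> \<alpha> \<le> real d * \<beta> \<Longrightarrow>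
      (\<And>p'. p' < k1 \<Longrightarrow> \<alpha> \<le> \<beta> * (real d + real k - real p' - real k1)) \<Longrightarrow>
      (\<And>p'. k1 < p' \<Longrightarrow> p' \<le> k \<Longrightarrow> \<beta> * (real d + real k - real p' - real k1) \<le> \<alpha>) \<Longrightarrow>
      gg \<alpha> \<beta> d k k1 \<le> ?v"
  proof -
    fix k1 assume hk: "hc \<le> k1" "k1 \<le> k" and ad: "\<alpha> \<le> real d * \<beta>"
      and L1: "\<And>p'. p' < k1 \<Longrightarrow> \<alpha> \<le> \<beta> * (real d + real k - real p' - real k1)"
      and L2: "\<And>p'. k1 < p' \<Longrightarrow> p' \<le> k \<Longrightarrow> \<beta> * (real d + real k - real p' - real k1) \<le> \<alpha>"
    have pk: "p \<le> k" using pq by simp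
    have hck: "hc \<le> k" unfolding hc_def by simp
    have L2p: "k1 < p \<Longrightarrow> \<beta> * (real d + real k - real p - real k1) \<le> \<alpha>" using L2 pk by blast
    have L2h: "k1 < hc \<Longrightarrow> \<beta> * (real d + real k - real hc - real k1) \<le> \<alpha>" using L2 hck by blast
    show "gg \<alpha> \<beta> d k k1 \<le> ?v"
    proof (cases "q \<le> p")
      case True
      then have "gg \<alpha> \<beta> d k p \<le> ?v" using value_ge_gp[OF b0 pq] Hpq by blast
      moreover have "gg \<alpha> \<beta> d k k1 \<le> gg \<alpha> \<beta> d k p" using L1 L2p by (intro g_cmp)
      ultimately show ?thesis by linarith
    next
      case False
      then have "gg \<alpha> \<beta> d k hc \<le> ?v"
        using value_ge_ghc[OF b0 pq _ _ ad] Hh unfolding hf_def hc_def by simp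
      moreover have "gg \<alpha> \<beta> d k k1 \<le> gg \<alpha> \<beta> d k hc" using L1 L2h hk by (intro g_cmp) auto
      ultimately show ?thesis by linarith
    qed
  qed
  have c2: "\<forall>k1 \<in> {hc..k}. real d + real k - 2 * real k1 - 1 \<le> \<alpha> / \<beta>
          \<and> \<alpha> / \<beta> < min (real d + real k - 2 * real k1 + 1) (real d) \<longrightarrow>
          real k1 * \<alpha> + (real d - real k1) * (real k - real k1) * \<beta> \<le> ?v"
  proof (intro ballI impI)
    fix k1 assume k1: "k1 \<in> {hc..k}"
      and cnd: "real d + real k - 2 * real k1 - 1 \<le> \<alpha> / \<beta> \<and> \<alpha> / \<beta> < min (real d + real k - 2 * real k1 + 1) (real d)"
    have lo: "(real d + real k - 2 * real k1 - 1) * \<beta> \<le> \<alpha>" using cnd b0 by (simp add: pos_le_divide_eq)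
    have hi: "\<alpha> < (real d + real k - 2 * real k1 + 1) * \<beta>" using cnd b0 by (simp add: pos_divide_less_eq)
    have ad: "\<alpha> \<le> real d * \<beta>" using cnd b0 by (simp add: pos_divide_less_eq)
    have L1: "\<alpha> \<le> \<beta> * (real d + real k - real p' - real k1)" if "p' < k1" for p'
    proof -
      have "real p' \<le> real k1 - 1" using that by auto
      then have "(real d + real k - 2 * real k1 + 1) * \<beta> \<le> (real d + real k - real p' - real k1) * \<beta>"
        using b0 by (intro mult_right_mono) auto
      then show ?thesis using hi by (simp add: algebra_simps)
    qed
    have L2: "\<beta> * (real d + real k - real p' - real k1) \<le> \<alpha>" if "k1 < p'" for p'
    proof -
      have "real p' \<ge> real k1 + 1" using that by auto
      then have "(real d + real k - real p' - real k1) * \<beta> \<le> (real d + real k - 2 * real k1 - 1) * \<beta>"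
        using b0 by (intro mult_right_mono) auto
      then show ?thesis using lo by (simp add: algebra_simps)
    qed
    show "real k1 * \<alpha> + (real d - real k1) * (real k - real k1) * \<beta> \<le> ?v"
      using gen[of k1] k1 ad L1 L2 unfolding gg_def by auto
  qed
  have c3: "\<alpha> / \<beta> < real d - real k - 1 \<longrightarrow> real k * \<alpha> \<le> ?v"
  proof
    assume "\<alpha> / \<beta> < real d - real k - 1"
    then have hi: "\<alpha> < (real d - real k - 1) * \<beta>" using b0 by (simp add: pos_divide_less_eq)
    have "(real d - real k - 1) * \<beta> \<le> real d * \<beta>" using b0 by (intro mult_right_mono) auto
    then have ad: "\<alpha> \<le> real d * \<beta>" using hi by linarith
    have L1: "\<alpha> \<le> \<beta> * (real d + real k - real p' - real k)" if "p' < k" for p'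
    proof -
      have "real p' \<le> real k" using that by auto
      then have "(real d - real k - 1) * \<beta> \<le> (real d + real k - real p' - real k) * \<beta>"
        using b0 by (intro mult_right_mono) auto
      then show ?thesis using hi by (simp add: algebra_simps)
    qed
    have hck: "hc \<le> k" unfolding hc_def by simp
    have "gg \<alpha> \<beta> d k k \<le> ?v" using gen[of k] hck ad L1 by auto
    then show "real k * \<alpha> \<le> ?v" unfolding gg_def by simp
  qed
  show ?thesis using c1 c2 c3 unfolding hf_def hc_def by blast
qed

lemma servers_fin: "finite (servers n s)"
proof (rule finite_subset[of _ "{0..s+1} \<times> {0..n}"])
  show "servers n s \<subseteq> {0..s+1} \<times> {0..n}"
  proof
    fix z assume "z \<in> servers n s"
    moreover have d1: "\<And>j. j \<le> n div s \<Longrightarrow> j \<le> n" using div_le_dividend le_trans by blast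
    moreover have d2: "\<And>j. j \<le> n mod s \<Longrightarrow> j \<le> n" using mod_less_eq_dividend le_trans by blast
    ultimately show "z \<in> {0..s+1} \<times> {0..n}" by (cases z) (auto simp: servers_def)
  qed
qed simp

lemma cluster_card: "1 \<le> i \<Longrightarrow> i \<le> s \<Longrightarrow> card {z \<in> servers n s. fst z = i} = n div s"
proof -
  assume i: "1 \<le> i" "i \<le> s"
  have "{z \<in> servers n s. fst z = i} = (\<lambda>j. (i, j)) ` {1..n div s}"
    using i by (auto simp: servers_def image_iff)
  moreover have "inj_on (\<lambda>j. (i, j)) {1..n div s}" by (auto intro: inj_onI)
  ultimately show ?thesis by (simp add: card_image)
qed

lemma nodes_eq: "ifg_nodes n s fs = {Src, DC} \<union> (\<lambda>(t, x). InN t x) ` ({..length fs} \<times> servers n s)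
                    \<union> (\<lambda>(t, x). OutN t x) ` ({..length fs} \<times> servers n s)"
  by (auto simp: ifg_nodes_def image_iff)

lemma nodes_fin: "finite (ifg_nodes n s fs)"
  unfolding nodes_eq using servers_fin by simp

lemma InN_in_nodes: "t \<le> length fs \<Longrightarrow> x \<in> servers n s \<Longrightarrow> InN t x \<in> ifg_nodes n s fs"
  unfolding ifg_nodes_def by blast
lemma OutN_in_nodes: "t \<le> length fs \<Longrightarrow> x \<in> servers n s \<Longrightarrow> OutN t x \<in> ifg_nodes n s fs"
  unfolding ifg_nodes_def by blast
lemma DC_in_nodes: "DC \<in> ifg_nodes n s fs" by (auto simp: ifg_nodes_def)
lemma Src_in_nodes: "Src \<in> ifg_nodes n s fs" by (auto simp: ifg_nodes_def)

lemma cap_nonneg: "0 < a \<Longrightarrow> 0 < b \<Longrightarrow> 0 \<le> ifg_cap n s a b fs t0 D u v"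
  by (cases u; cases v) auto

lemma cut_swap: "cut_value c V S = (\<Sum>v\<in>V - S. \<Sum>u\<in>S. c u v)"
proof -
  have "cut_value c V S = (\<Sum>u\<in>S. \<Sum>v\<in>V - S. c u v)"
    unfolding cut_value_def by (rule sum.cartesian_product[symmetric])
  also have "\<dots> = (\<Sum>v\<in>V - S. \<Sum>u\<in>S. c u v)" by (rule sum.swap)
  finally show ?thesis .
qed

lemma cap_Out: "t \<le> length fs \<Longrightarrow> x \<in> servers n s \<Longrightarrow>
   ifg_cap n s a b fs t0 D u (OutN t x) = (if u = InN t x then ereal a else 0)"
  by (cases u) auto

lemma cap_In0: "x \<in> servers n s \<Longrightarrow> ifg_cap n s a b fs t0 D u (InN 0 x) = (if u = Src then \<infinity> else 0)"
  by (cases u) auto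

lemma cap_In_rep: "t < length fs \<Longrightarrow> fst (fs ! t) \<in> servers n s \<Longrightarrow>
   ifg_cap n s a b fs t0 D u (InN (Suc t) (fst (fs ! t))) =
     (if u \<in> (\<lambda>z. OutN t z) ` {z \<in> servers n s. fst z = snd (fs ! t)} then ereal b else 0)"
  by (cases u) auto

lemma cap_In_surv: "t < length fs \<Longrightarrow> x \<in> servers n s \<Longrightarrow> x \<noteq> fst (fs ! t) \<Longrightarrow>
   ifg_cap n s a b fs t0 D u (InN (Suc t) x) = (if u = OutN t x then \<infinity> else 0)"
  by (cases u) auto

lemma cap_DC: "ifg_cap n s a b fs t0 D u DC = (if u \<in> (\<lambda>x. OutN t0 x) ` D then \<infinity> else 0)"
  by (cases u) auto

lemma in_Out: "finite S \<Longrightarrow> t \<le> length fs \<Longrightarrow> x \<in> servers n s \<Longrightarrow>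
   (\<Sum>u\<in>S. ifg_cap n s a b fs t0 D u (OutN t x)) = (if InN t x \<in> S then ereal a else 0)"
  by (simp add: cap_Out sum.delta)

lemma in_rep: assumes finS: "finite S" and t: "t < length fs" and y: "fst (fs ! t) \<in> servers n s"
  shows "(\<Sum>u\<in>S. ifg_cap n s a b fs t0 D u (InN (Suc t) (fst (fs ! t)))) =
     ereal (b * real (card {z \<in> servers n s. fst z = snd (fs ! t) \<and> OutN t z \<in> S}))"
proof -
  let ?C = "{z \<in> servers n s. fst z = snd (fs ! t)}"
  let ?A = "(\<lambda>z. OutN t z) ` ?C"
  have "(\<Sum>u\<in>S. ifg_cap n s a b fs t0 D u (InN (Suc t) (fst (fs ! t)))) =
        (\<Sum>u\<in>S. if u \<in> ?A then ereal b else 0)"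
    using t y by (simp add: cap_In_rep)
  also have "\<dots> = (\<Sum>u\<in>S \<inter> ?A. ereal b)"
    by (rule sum.inter_restrict[OF finS, symmetric])
  also have "\<dots> = ereal (real (card (S \<inter> ?A)) * b)" by simp
  also have "S \<inter> ?A = (\<lambda>z. OutN t z) ` {z \<in> servers n s. fst z = snd (fs ! t) \<and> OutN t z \<in> S}"
    by auto
  also have "card \<dots> = card {z \<in> servers n s. fst z = snd (fs ! t) \<and> OutN t z \<in> S}"
    by (auto intro!: card_image inj_onI)
  finally show ?thesis by (simp add: mult.commute)
qed

theorem lower_bound:
  fixes a b :: real
  assumes a0: "0 < a" and b0: "0 < b" and vs: "valid_seq n s fs" and t0L: "t0 \<le> length fs"
    and DX: "D \<subseteq> servers n s" and SV: "S \<subseteq> ifg_nodes n s fs" and SrcS: "Src \<in> S" and DCS: "DC \<notin> S"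
  shows "\<exists>p q H. p + q = card D \<and> 4 * H \<le> (p + q) * (p + q) \<and> (q \<le> p \<longrightarrow> H \<le> p * q) \<and>
           ereal (real p * a + b * (real q * real (n div s) - real H))
             \<le> cut_value (ifg_cap n s a b fs t0 D) (ifg_nodes n s fs) S"
proof -
  define X where "X = servers n s"
  define V where "V = ifg_nodes n s fs"
  define c where "c = ifg_cap n s a b fs t0 D"
  define L where "L = length fs"
  have finX: "finite X" unfolding X_def by (rule servers_fin)
  have finV: "finite V" unfolding V_def by (rule nodes_fin)
  have finS: "finite S" using SV finV finite_subset V_def by blast
  show ?thesis
  proof (cases "\<exists>u\<in>S. \<exists>v\<in>V - S. c u v = \<infinity>")
    case True
    have "cut_value c V S = \<infinity>"
      unfolding cut_value_def using True finS finV by (subst sum_Pinfty) auto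
    then show ?thesis unfolding c_def V_def
      by (intro exI[of _ "card D"] exI[of _ 0]) auto
  next
    case False
    then have noinf: "\<And>u v. u \<in> S \<Longrightarrow> v \<in> V \<Longrightarrow> v \<notin> S \<Longrightarrow> c u v \<noteq> \<infinity>" by blast
    have fsX: "\<And>t. t < L \<Longrightarrow> fst (fs ! t) \<in> X \<and> snd (fs ! t) \<in> {1..s} \<and> snd (fs ! t) \<noteq> fst (fst (fs ! t))"
      using vs unfolding valid_seq_def X_def L_def by (metis nth_mem)
    interpret lbloc X "n div s" L t0 D "\<lambda>t. fst (fs ! t)" "\<lambda>t. snd (fs ! t)"
      "\<lambda>t x. OutN t x \<notin> S" "\<lambda>t x. InN t x \<notin> S"
    proof
      show "finite X" by (rule finX)
      show "\<And>t. t < L \<Longrightarrow> fst (fs ! t) \<in> X" using fsX by blast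
      show "\<And>t. t < L \<Longrightarrow> snd (fs ! t) \<noteq> fst (fst (fs ! t))" using fsX by blast
      show "\<And>t. t < L \<Longrightarrow> card {z \<in> X. fst z = snd (fs ! t)} = n div s"
        using fsX unfolding X_def by (auto intro: cluster_card)
      show "D \<subseteq> X" using DX X_def by simp
      show "t0 \<le> L" using t0L L_def by simp
      show "\<And>x. x \<in> D \<Longrightarrow> OutN t0 x \<notin> S"
      proof
        fix x assume xD: "x \<in> D" and "OutN t0 x \<in> S"
        moreover have "c (OutN t0 x) DC = \<infinity>" using xD by (simp add: c_def)
        ultimately show False using noinf DCS DC_in_nodes V_def by blast
      qed
      show "\<And>x. x \<in> X \<Longrightarrow> \<not> InN 0 x \<notin> S"
      proof -
        fix x assume xX: "x \<in> X"
        show "\<not> InN 0 x \<notin> S"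
        proof
          assume "InN 0 x \<notin> S"
          moreover have "c Src (InN 0 x) = \<infinity>" using xX by (simp add: c_def X_def)
          moreover have "InN 0 x \<in> V" using xX InN_in_nodes V_def X_def by auto
          ultimately show False using noinf SrcS by blast
        qed
      qed
      show "\<And>t x. t < L \<Longrightarrow> x \<in> X \<Longrightarrow> x \<noteq> fst (fs ! t) \<Longrightarrow> InN (Suc t) x \<notin> S \<Longrightarrow> OutN t x \<notin> S"
      proof
        fix t x assume t: "t < L" and xX: "x \<in> X" and xn: "x \<noteq> fst (fs ! t)" and iS: "InN (Suc t) x \<notin> S"
          and oS: "OutN t x \<in> S"
        have "c (OutN t x) (InN (Suc t) x) = \<infinity>" using t xX xn by (simp add: c_def X_def L_def)
        moreover have "InN (Suc t) x \<in> V" using t xX InN_in_nodes V_def X_def L_def by auto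
        ultimately show False using noinf oS iS by blast
      qed
    qed
    obtain p q H where pqH: "p + q = card D" "4 * H \<le> (p + q) * (p + q)" "q \<le> p \<longrightarrow> H \<le> p * q"
      and le: "real p * a + b * (real q * real (n div s) - real H) \<le> (\<Sum>e\<in>EV. cost a b e)"
      using lb_main[OF a0 b0] by blast
    define nodeOf where "nodeOf e = (if InN (fst e) (snd e) \<notin> S then InN (fst e) (snd e) else OutN (fst e) (snd e))" for e
    have inj: "inj_on nodeOf EV" by (auto intro!: inj_onI simp: nodeOf_def split: if_splits)
    have evE: "\<And>e. e \<in> EV \<Longrightarrow> ev (fst e) (snd e)" by (auto simp: EV_def)
    have sub: "nodeOf ` EV \<subseteq> V - S"
    proof
      fix v assume "v \<in> nodeOf ` EV"
      then obtain t x where e: "(t, x) \<in> EV" and v: "v = nodeOf (t, x)" by auto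
      have "ev t x" using e by (auto simp: EV_def)
      then have tL: "t \<le> L" and xX: "x \<in> X" and ob: "OutN t x \<notin> S" by (auto simp: ev_def)
      show "v \<in> V - S" using v tL xX ob InN_in_nodes OutN_in_nodes V_def X_def L_def
        by (auto simp: nodeOf_def)
    qed
    have nn: "\<And>v. 0 \<le> (\<Sum>u\<in>S. c u v)" using cap_nonneg[OF a0 b0] c_def by (simp add: sum_nonneg)
    have per: "\<And>e. e \<in> EV \<Longrightarrow> (\<Sum>u\<in>S. c u (nodeOf e)) = ereal (cost a b e)"
    proof -
      fix e assume eE: "e \<in> EV"
      obtain t x where e: "e = (t, x)" by (cases e)
      have evt: "ev t x" using eE e by (auto simp: EV_def)
      then have tL: "t \<le> L" and xX: "x \<in> X" by (auto simp: ev_def)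
      show "(\<Sum>u\<in>S. c u (nodeOf e)) = ereal (cost a b e)"
      proof (cases "InN t x \<notin> S")
        case True
        then have t0: "0 < t" and xy: "x = fst (fs ! (t - 1))" using evt by (auto simp: ev_def)
        then obtain t' where t': "t = Suc t'" by (cases t) auto
        have t'L: "t' < length fs" using tL t' L_def by simp
        have yX: "fst (fs ! t') \<in> servers n s" using xX xy t' X_def by simp
        have "(\<Sum>u\<in>S. c u (nodeOf e)) = (\<Sum>u\<in>S. c u (InN (Suc t') (fst (fs ! t'))))"
          using True e t' xy by (simp add: nodeOf_def)
        also have "\<dots> = ereal (b * real (card {z \<in> servers n s. fst z = snd (fs ! t') \<and> OutN t' z \<in> S}))"
          unfolding c_def by (rule in_rep[OF finS t'L yX])
        also have "\<dots> = ereal (cost a b e)" unfolding cost_def using True e t' by (simp add: X_def)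
        finally show ?thesis .
      next
        case False
        have "(\<Sum>u\<in>S. c u (nodeOf e)) = (\<Sum>u\<in>S. c u (OutN t x))"
          using False e by (simp add: nodeOf_def)
        also have "\<dots> = ereal a" unfolding c_def using tL xX False L_def X_def by (simp add: in_Out[OF finS])
        also have "\<dots> = ereal (cost a b e)" unfolding cost_def using False e by simp
        finally show ?thesis .
      qed
    qed
    have "ereal (\<Sum>e\<in>EV. cost a b e) = (\<Sum>e\<in>EV. ereal (cost a b e))" by simp
    also have "\<dots> = (\<Sum>e\<in>EV. (\<Sum>u\<in>S. c u (nodeOf e)))" using per by simp
    also have "\<dots> = (\<Sum>v\<in>nodeOf ` EV. (\<Sum>u\<in>S. c u v))" using inj by (simp add: sum.reindex)
    also have "\<dots> \<le> (\<Sum>v\<in>V - S. (\<Sum>u\<in>S. c u v))" using sub finV nn by (intro sum_mono2) auto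
    also have "\<dots> = cut_value c V S" by (simp add: cut_swap)
    finally have "ereal (\<Sum>e\<in>EV. cost a b e) \<le> cut_value c V S" .
    moreover have "ereal (real p * a + b * (real q * real (n div s) - real H)) \<le> ereal (\<Sum>e\<in>EV. cost a b e)"
      using le by simp
    ultimately show ?thesis using pqH unfolding c_def V_def by (meson order_trans)
  qed
qed

locale ubloc =
  fixes n s p q :: nat and av :: bool and a b :: real
  assumes s2: "2 \<le> s" and pd: "p \<le> n div s" and qd: "q \<le> n div s" and a0: "0 < a" and b0: "0 < b"
begin

definition ufs :: "((nat \<times> nat) \<times> nat) list" where
  "ufs = map (\<lambda>t. if t < p then ((1, t + 1), 2) else ((2, t + 1 - p), 1)) [0..<p + q]"
definition DD :: "(nat \<times> nat) set" where
  "DD = (\<lambda>j. (1, j)) ` {1..p} \<union> (\<lambda>j. (2, j)) ` {1..q}"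
definition tau :: "nat \<times> nat \<Rightarrow> nat" where
  "tau x = (if fst x = 1 then snd x else p + snd x)"
definition uo :: "nat \<Rightarrow> nat \<times> nat \<Rightarrow> bool" where
  "uo t x \<longleftrightarrow> x \<in> DD \<and> tau x \<le> t \<and> t \<le> p + q"
definition ui :: "nat \<Rightarrow> nat \<times> nat \<Rightarrow> bool" where
  "ui t x \<longleftrightarrow> uo t x \<and> (tau x < t \<or> fst x = 2 \<or> \<not> av)"
definition WW :: "node set" where
  "WW = {DC} \<union> {OutN t x | t x. uo t x} \<union> {InN t x | t x. ui t x}"
definition VV :: "node set" where "VV = ifg_nodes n s ufs"
definition SS :: "node set" where "SS = VV - WW"
definition cc where "cc = ifg_cap n s a b ufs (p + q) DD"

lemma len: "length ufs = p + q" by (simp add: ufs_def)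

lemma nth_ufs: "t < p + q \<Longrightarrow> ufs ! t = (if t < p then ((1, t + 1), 2) else ((2, t + 1 - p), 1))"
  by (simp add: ufs_def)

lemma DD_cases: "x \<in> DD \<Longrightarrow> (\<exists>j. x = (1, j) \<and> 1 \<le> j \<and> j \<le> p) \<or> (\<exists>j. x = (2, j) \<and> 1 \<le> j \<and> j \<le> q)"
  by (auto simp: DD_def)

lemma DD_X: "DD \<subseteq> servers n s"
  using s2 pd qd by (auto simp: DD_def servers_def)

lemma card_DD: "card DD = p + q"
proof -
  have "card ((\<lambda>j. (1::nat, j)) ` {1..p}) = p" by (simp add: card_image inj_on_def)
  moreover have "card ((\<lambda>j. (2::nat, j)) ` {1..q}) = q" by (simp add: card_image inj_on_def)
  moreover have "(\<lambda>j. (1::nat, j)) ` {1..p} \<inter> (\<lambda>j. (2::nat, j)) ` {1..q} = {}" by auto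
  ultimately show ?thesis unfolding DD_def by (simp add: card_Un_disjoint)
qed

lemma fst_ufs: "t < p + q \<Longrightarrow> fst (ufs ! t) \<in> DD \<and> tau (fst (ufs ! t)) = Suc t"
  by (auto simp: nth_ufs DD_def tau_def image_iff)

lemma fst_ufs_eq: "t < p + q \<Longrightarrow> x \<in> DD \<Longrightarrow> (fst (ufs ! t) = x) = (tau x = Suc t)"
  using DD_cases[of x] by (auto simp: nth_ufs tau_def)

lemma snd_ufs: "t < p + q \<Longrightarrow> snd (ufs ! t) = (if t < p then 2 else 1)"
  by (simp add: nth_ufs)

lemma valid: "valid_seq n s ufs"
  unfolding valid_seq_def
proof
  fix e assume "e \<in> set ufs"
  then obtain t where t: "t < p + q" and e: "e = ufs ! t" by (auto simp: in_set_conv_nth len)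
  have "fst e \<in> servers n s" using fst_ufs[OF t] DD_X e by auto
  moreover have "snd e \<in> {1..s}" using s2 snd_ufs[OF t] e by auto
  moreover have "snd e \<noteq> fst (fst e)" using e t by (auto simp: nth_ufs)
  ultimately show "fst e \<in> servers n s \<and> snd e \<in> {1..s} \<and> snd e \<noteq> fst (fst e)" by blast
qed

lemma tau_DD: "x \<in> DD \<Longrightarrow> 1 \<le> tau x \<and> tau x \<le> p + q"
  by (auto simp: DD_def tau_def)

lemma WW_V: "WW \<subseteq> VV"
  using DD_X by (auto simp: WW_def VV_def ui_def uo_def ifg_nodes_def len)

lemma SrcS: "Src \<in> SS" by (simp add: SS_def VV_def WW_def Src_in_nodes)
lemma DCS: "DC \<notin> SS" by (simp add: SS_def WW_def)
lemma SV: "SS \<subseteq> VV" by (auto simp: SS_def)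
lemma VS: "VV - SS = WW" using WW_V by (auto simp: SS_def)
lemma finV: "finite VV" by (simp add: VV_def nodes_fin)
lemma finS: "finite SS" using finV SV finite_subset by blast

lemma InW: "(InN t x \<in> WW) = ui t x" unfolding WW_def by blast
lemma OutW: "(OutN t x \<in> WW) = uo t x" unfolding WW_def by blast
lemma InS: "t \<le> p + q \<Longrightarrow> x \<in> servers n s \<Longrightarrow> (InN t x \<in> SS) = (\<not> ui t x)"
proof -
  assume "t \<le> p + q" "x \<in> servers n s"
  then have "InN t x \<in> VV" unfolding VV_def using InN_in_nodes len by metis
  then show ?thesis unfolding SS_def using InW by blast
qed
lemma OutS: "t \<le> p + q \<Longrightarrow> x \<in> servers n s \<Longrightarrow> (OutN t x \<in> SS) = (\<not> uo t x)"
proof -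
  assume "t \<le> p + q" "x \<in> servers n s"
  then have "OutN t x \<in> VV" unfolding VV_def using OutN_in_nodes len by metis
  then show ?thesis unfolding SS_def using OutW by blast
qed

definition z1 :: "nat \<Rightarrow> node" where "z1 j = (if av then OutN j (1, j) else InN j (1, j))"
definition z2 :: "nat \<Rightarrow> node" where "z2 j = InN (p + j) (2, j)"
definition c1 :: real where "c1 = (if av then a else b * real (n div s))"
definition c2 :: real where "c2 = b * (real (n div s) - real p)"

definition inS where "inS v = (\<Sum>u\<in>SS. cc u v)"

lemma in_DC: "inS DC = 0"
proof -
  have "\<forall>u\<in>SS. cc u DC = 0"
  proof
    fix u assume uS: "u \<in> SS"
    show "cc u DC = 0"
    proof (cases "u \<in> (\<lambda>x. OutN (p + q) x) ` DD")
      case True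
      then obtain x where x: "x \<in> DD" "u = OutN (p + q) x" by auto
      then have "uo (p + q) x" using tau_DD by (auto simp: uo_def)
      then have "u \<in> WW" using x OutW by blast
      then show ?thesis using uS by (simp add: SS_def)
    next
      case False then show ?thesis by (simp add: cc_def cap_DC)
    qed
  qed
  then show ?thesis by (simp add: inS_def)
qed

lemma in_z1: "j \<in> {1..p} \<Longrightarrow> inS (z1 j) = ereal c1"
proof -
  assume j: "j \<in> {1..p}"
  have xD: "(1, j) \<in> DD" using j by (auto simp: DD_def)
  have xX: "(1, j) \<in> servers n s" using xD DD_X by auto
  have jk: "j \<le> p + q" using j by simp
  have tj: "tau (1, j) = j" by (simp add: tau_def)
  show ?thesis
  proof (cases av)
    case True
    have "\<not> ui j (1, j)" unfolding ui_def using True tj by simp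
    then have "InN j (1, j) \<in> SS" using InS[OF jk xX] by simp
    then show ?thesis unfolding inS_def z1_def c1_def cc_def using True jk xX finS len
      by (simp add: in_Out)
  next
    case False
    obtain t' where t': "j = Suc t'" using j by (cases j) auto
    have t'k: "t' < length ufs" using jk t' len by simp
    have f1: "fst (ufs ! t') = (1, j)" using fst_ufs_eq[of t' "(1, j)"] xD t' tj t'k len by simp
    have s1: "snd (ufs ! t') = 2" using snd_ufs[of t'] t' j t'k len by simp
    have yX: "fst (ufs ! t') \<in> servers n s" using f1 xX by simp
    have "inS (z1 j) = ereal (b * real (card {z \<in> servers n s. fst z = snd (ufs ! t') \<and> OutN t' z \<in> SS}))"
      unfolding inS_def z1_def cc_def using in_rep[OF finS t'k yX, of a b "p + q" DD] False f1 t' by simp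
    also have "{z \<in> servers n s. fst z = snd (ufs ! t') \<and> OutN t' z \<in> SS} = {z \<in> servers n s. fst z = 2}"
    proof -
      have "\<And>z. z \<in> servers n s \<Longrightarrow> fst z = 2 \<Longrightarrow> OutN t' z \<in> SS"
      proof -
        fix z assume zX: "z \<in> servers n s" and z2: "fst z = 2"
        have "\<not> uo t' z"
        proof
          assume "uo t' z"
          then have "z \<in> DD" "tau z \<le> t'" by (auto simp: uo_def)
          then show False using z2 t' j by (auto simp: DD_def tau_def)
        qed
        then show "OutN t' z \<in> SS" using OutS[of t' z] zX t'k len by simp
      qed
      then show ?thesis using s1 by auto
    qed
    also have "card {z \<in> servers n s. fst z = 2} = n div s" using s2 by (intro cluster_card) auto
    finally show ?thesis unfolding c1_def using False by simp
  qed
qed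

lemma in_z2: "j \<in> {1..q} \<Longrightarrow> inS (z2 j) = ereal c2"
proof -
  assume j: "j \<in> {1..q}"
  have xD: "(2, j) \<in> DD" using j by (auto simp: DD_def)
  have xX: "(2, j) \<in> servers n s" using xD DD_X by auto
  have tj: "tau (2, j) = p + j" by (simp add: tau_def)
  obtain t' where t': "p + j = Suc t'" using j by (cases "p + j") auto
  have t'k: "t' < length ufs" using j t' len by simp
  have f1: "fst (ufs ! t') = (2, j)" using fst_ufs_eq[of t' "(2, j)"] xD t' tj t'k len by simp
  have s1: "snd (ufs ! t') = 1" using snd_ufs[of t'] t' j t'k len by simp
  have yX: "fst (ufs ! t') \<in> servers n s" using f1 xX by simp
  have "inS (z2 j) = ereal (b * real (card {z \<in> servers n s. fst z = snd (ufs ! t') \<and> OutN t' z \<in> SS}))"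
    unfolding inS_def z2_def cc_def using in_rep[OF finS t'k yX, of a b "p + q" DD] f1 t' by simp
  also have "{z \<in> servers n s. fst z = snd (ufs ! t') \<and> OutN t' z \<in> SS} = (\<lambda>m. (1, m)) ` {p + 1..n div s}"
  proof -
    have "\<And>z. z \<in> servers n s \<Longrightarrow> fst z = 1 \<Longrightarrow> (OutN t' z \<in> SS) = (p < snd z)"
    proof -
      fix z assume zX: "z \<in> servers n s" and z1: "fst z = 1"
      have "uo t' z = (snd z \<le> p)"
        using zX z1 t' j by (cases z) (auto simp: uo_def DD_def tau_def servers_def)
      then show "(OutN t' z \<in> SS) = (p < snd z)" using OutS[of t' z] zX t'k len by auto
    qed
    moreover have "\<And>m. (1, m) \<in> servers n s \<longleftrightarrow> 1 \<le> m \<and> m \<le> n div s"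
      using s2 by (auto simp: servers_def)
    ultimately show ?thesis using s1 pd by (auto simp: image_iff)
  qed
  also have "card ((\<lambda>m. (1::nat, m)) ` {p + 1..n div s}) = n div s - p"
    by (simp add: card_image inj_on_def)
  finally show ?thesis unfolding c2_def using pd by (simp add: of_nat_diff)
qed

lemma in_other: "v \<in> WW \<Longrightarrow> v \<notin> z1 ` {1..p} \<Longrightarrow> v \<notin> z2 ` {1..q} \<Longrightarrow> inS v = 0"
proof -
  assume vW: "v \<in> WW" and n1: "v \<notin> z1 ` {1..p}" and n2: "v \<notin> z2 ` {1..q}"
  consider "v = DC" | t x where "v = OutN t x" "uo t x" | t x where "v = InN t x" "ui t x"
    using vW by (auto simp: WW_def)
  then show ?thesis
  proof cases
    case 1 then show ?thesis by (simp add: in_DC)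
  next
    case (2 t x)
    have xD: "x \<in> DD" and tk: "t \<le> p + q" and tt: "tau x \<le> t" using 2 by (auto simp: uo_def)
    have xX: "x \<in> servers n s" using xD DD_X by auto
    have "InN t x \<notin> SS"
    proof
      assume "InN t x \<in> SS"
      then have "\<not> ui t x" using InS[OF tk xX] by simp
      then have "tau x = t" "fst x = 1" "av" using 2 tt DD_cases[OF xD] by (auto simp: ui_def)
      then have "v \<in> z1 ` {1..p}" unfolding z1_def using xD 2 by (auto simp: DD_def tau_def image_iff)
      then show False using n1 by simp
    qed
    then show ?thesis using 2 tk xX finS len by (simp add: inS_def cc_def in_Out)
  next
    case (3 t x)
    have xD: "x \<in> DD" and tk: "t \<le> p + q" and tt: "tau x \<le> t" using 3 by (auto simp: ui_def uo_def)
    have xX: "x \<in> servers n s" using xD DD_X by auto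
    have tlt: "tau x < t"
    proof (rule ccontr)
      assume "\<not> tau x < t"
      then have te: "tau x = t" using tt by simp
      show False
      proof (cases "fst x = 1")
        case True
        then have "\<not> av" using 3 te by (auto simp: ui_def)
        then have "v \<in> z1 ` {1..p}" unfolding z1_def using xD 3 te True by (auto simp: DD_def tau_def image_iff)
        then show False using n1 by simp
      next
        case False
        then have "v \<in> z2 ` {1..q}" unfolding z2_def using xD 3 te by (auto simp: DD_def tau_def image_iff)
        then show False using n2 by simp
      qed
    qed
    obtain t' where t': "t = Suc t'" using tlt by (cases t) auto
    have t'k: "t' < length ufs" using tk t' len by simp
    have xn: "x \<noteq> fst (ufs ! t')" using fst_ufs_eq[of t' x] xD t' tlt t'k len by auto
    have "uo t' x" using tlt t' xD tk by (auto simp: uo_def)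
    then have "OutN t' x \<notin> SS" using OutS[of t' x] xX t'k len by simp
    then have "\<forall>u\<in>SS. cc u (InN t x) = 0" using t' t'k xX xn by (auto simp: cc_def cap_In_surv)
    then show ?thesis using 3 by (simp add: inS_def)
  qed
qed

lemma cut_val: "cut_value cc VV SS = ereal (real p * c1 + real q * c2)"
proof -
  have inj1: "inj_on z1 {1..p}" by (auto intro!: inj_onI simp: z1_def split: if_splits)
  have inj2: "inj_on z2 {1..q}" by (auto intro!: inj_onI simp: z2_def)
  have disj: "z1 ` {1..p} \<inter> z2 ` {1..q} = {}" by (auto simp: z1_def z2_def split: if_splits)
  have sub1: "z1 ` {1..p} \<subseteq> WW"
  proof
    fix v assume "v \<in> z1 ` {1..p}"
    then obtain j where j: "j \<in> {1..p}" "v = z1 j" by auto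
    have D: "(1, j) \<in> DD" using j by (auto simp: DD_def)
    have uo1: "uo j (1, j)" unfolding uo_def using D j by (simp add: tau_def)
    show "v \<in> WW"
    proof (cases av)
      case True then show ?thesis unfolding j(2) z1_def using uo1 OutW by simp
    next
      case False
      then have "ui j (1, j)" unfolding ui_def using uo1 by simp
      then show ?thesis unfolding j(2) z1_def using False InW by simp
    qed
  qed
  have sub2: "z2 ` {1..q} \<subseteq> WW"
  proof
    fix v assume "v \<in> z2 ` {1..q}"
    then obtain j where j: "j \<in> {1..q}" "v = z2 j" by auto
    have D: "(2, j) \<in> DD" using j by (auto simp: DD_def)
    have "ui (p + j) (2, j)" unfolding ui_def uo_def using D j by (simp add: tau_def)
    then show "v \<in> WW" unfolding j(2) z2_def using InW by simp
  qed
  have finW: "finite WW" using finV WW_V finite_subset by blast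
  have "cut_value cc VV SS = (\<Sum>v\<in>WW. inS v)" by (simp add: cut_swap VS inS_def)
  also have "\<dots> = (\<Sum>v\<in>z1 ` {1..p} \<union> z2 ` {1..q}. inS v)"
    using finW sub1 sub2 in_other by (intro sum.mono_neutral_right) auto
  also have "\<dots> = (\<Sum>v\<in>z1 ` {1..p}. inS v) + (\<Sum>v\<in>z2 ` {1..q}. inS v)"
    using disj by (simp add: sum.union_disjoint)
  also have "(\<Sum>v\<in>z1 ` {1..p}. inS v) = (\<Sum>j\<in>{1..p}. inS (z1 j))" using inj1 by (simp add: sum.reindex)
  also have "\<dots> = (\<Sum>j\<in>{1..p}. ereal c1)" using in_z1 by simp
  also have "(\<Sum>v\<in>z2 ` {1..q}. inS v) = (\<Sum>j\<in>{1..q}. inS (z2 j))" using inj2 by (simp add: sum.reindex)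
  also have "\<dots> = (\<Sum>j\<in>{1..q}. ereal c2)" using in_z2 by simp
  finally show ?thesis by simp
qed

theorem upper: "Fstar n (p + q) s a b \<le> ereal (real p * c1 + real q * c2)"
proof -
  have mem: "(ufs, p + q, DD) \<in> {(fs, t0, D). valid_seq n s fs \<and> t0 \<le> length fs \<and> D \<subseteq> servers n s \<and> card D = p + q}"
    using valid len DD_X card_DD by simp
  have "Fstar n (p + q) s a b \<le> (\<lambda>(fs, t0, D). min_cut n s a b fs t0 D) (ufs, p + q, DD)"
    unfolding Fstar_def by (rule INF_lower[OF mem])
  then have "Fstar n (p + q) s a b \<le> min_cut n s a b ufs (p + q) DD" by simp
  also have "\<dots> \<le> cut_value cc VV SS"
    unfolding min_cut_def cc_def VV_def
    by (rule INF_lower) (use SV SrcS DCS VV_def in auto)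
  finally show ?thesis using cut_val by simp
qed

end

lemma LBcut:
  fixes a b v :: real
  assumes a0: "0 < a" and b0: "0 < b"
    and H: "\<And>p q H. p + q = k \<Longrightarrow> 4 * H \<le> (p + q) * (p + q) \<Longrightarrow> (q \<le> p \<longrightarrow> H \<le> p * q) \<Longrightarrow>
             v \<le> real p * a + b * (real q * real (n div s) - real H)"
    and vs: "valid_seq n s fs" and t0L: "t0 \<le> length fs" and DX: "D \<subseteq> servers n s" and cD: "card D = k"
  shows "ereal v \<le> min_cut n s a b fs t0 D"
  unfolding min_cut_def
proof (rule INF_greatest)
  fix S assume "S \<in> {S. S \<subseteq> ifg_nodes n s fs \<and> Src \<in> S \<and> DC \<notin> S}"
  then have SV: "S \<subseteq> ifg_nodes n s fs" and SrcS: "Src \<in> S" and DCS: "DC \<notin> S" by auto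
  obtain p q Hh where pq: "p + q = card D" "4 * Hh \<le> (p + q) * (p + q)" "q \<le> p \<longrightarrow> Hh \<le> p * q"
    and le: "ereal (real p * a + b * (real q * real (n div s) - real Hh))
             \<le> cut_value (ifg_cap n s a b fs t0 D) (ifg_nodes n s fs) S"
    using lower_bound[OF a0 b0 vs t0L DX SV SrcS DCS] by blast
  have "v \<le> real p * a + b * (real q * real (n div s) - real Hh)" using H pq cD by simp
  then have "ereal v \<le> ereal (real p * a + b * (real q * real (n div s) - real Hh))" by simp
  then show "ereal v \<le> cut_value (ifg_cap n s a b fs t0 D) (ifg_nodes n s fs) S" using le by (rule order_trans)
qed

lemma Fstar_ge:
  fixes a b v :: real
  assumes a0: "0 < a" and b0: "0 < b"
    and H: "\<And>p q H. p + q = k \<Longrightarrow> 4 * H \<le> (p + q) * (p + q) \<Longrightarrow> (q \<le> p \<longrightarrow> H \<le> p * q) \<Longrightarrow>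
             v \<le> real p * a + b * (real q * real (n div s) - real H)"
  shows "ereal v \<le> Fstar n k s a b"
  unfolding Fstar_def
  by (rule INF_greatest) (auto intro!: LBcut[OF a0 b0 H])

lemma floor_half: "\<lfloor>real k / 2\<rfloor> = int (k div 2)"
proof (rule floor_unique)
  have h1: "2 * (k div 2) \<le> k" by presburger
  have h2: "k < 2 * (k div 2) + 2" by presburger
  have r1: "real (2 * (k div 2)) \<le> real k" using h1 by (simp only: of_nat_le_iff)
  have r2: "real k < real (2 * (k div 2) + 2)" using h2 by (simp only: of_nat_less_iff)
  have e: "real_of_int (int (k div 2)) = real (k div 2)" by simp
  show "real_of_int (int (k div 2)) \<le> real k / 2" using r1 e by (simp; linarith)
  show "real k / 2 < real_of_int (int (k div 2)) + 1" using r2 e by (simp; linarith)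
qed

lemma ceil_half: "\<lceil>real k / 2\<rceil> = int ((k + 1) div 2)"
proof (rule ceiling_unique)
  have h1: "k \<le> 2 * ((k + 1) div 2)" by presburger
  have h2: "2 * ((k + 1) div 2) < k + 2" by presburger
  have r1: "real k \<le> real (2 * ((k + 1) div 2))" using h1 by (simp only: of_nat_le_iff)
  have r2: "real (2 * ((k + 1) div 2)) < real (k + 2)" using h2 by (simp only: of_nat_less_iff)
  have e: "real_of_int (int ((k + 1) div 2)) = real ((k + 1) div 2)" by simp
  show "real_of_int (int ((k + 1) div 2)) - 1 < real k / 2" using r2 e by (simp; linarith)
  show "real k / 2 \<le> real_of_int (int ((k + 1) div 2))" using r1 e by (simp; linarith)
qed

theorem lemma3:
  fixes n k s d :: nat and \<alpha> \<beta> :: real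
  assumes "n > 0" "k > 0" "2 \<le> s" "s \<le> n div k"
    and "d = n div s"
    and "\<alpha> > 0" "\<beta> > 0"
  shows "(real d \<le> \<alpha> / \<beta> \<longrightarrow>
            Fstar n k s \<alpha> \<beta> = ereal (real k * real d * \<beta>
               - of_int \<lfloor>real k / 2\<rfloor> * of_int \<lceil>real k / 2\<rceil> * \<beta>))
       \<and> (\<forall>k1 \<in> {nat \<lceil>real k / 2\<rceil>..k}.
            real d + real k - 2 * real k1 - 1 \<le> \<alpha> / \<beta>
            \<and> \<alpha> / \<beta> < min (real d + real k - 2 * real k1 + 1) (real d) \<longrightarrow>
            Fstar n k s \<alpha> \<beta> = ereal (real k1 * \<alpha> + (real d - real k1) * (real k - real k1) * \<beta>))
       \<and> (\<alpha> / \<beta> < real d - real k - 1 \<longrightarrow> Fstar n k s \<alpha> \<beta> = ereal (real k * \<alpha>))"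
proof -
  note s2 = assms(3) and dd = assms(5) and a0 = assms(6) and b0 = assms(7)
  have sk: "s * k \<le> n" using assms(2,4) by (simp add: less_eq_div_iff_mult_less_eq)
  have s0: "0 < s" using s2 by simp
  have kd: "k \<le> d" unfolding dd using sk s0 by (simp add: less_eq_div_iff_mult_less_eq mult.commute)
  define hf where "hf = k div 2"
  define hc where "hc = (k + 1) div 2"
  have hfc: "hf + hc = k" unfolding hf_def hc_def by presburger
  have FA: "\<And>p q H. p + q = k \<Longrightarrow> 4 * H \<le> (p + q) * (p + q) \<Longrightarrow> (q \<le> p \<longrightarrow> H \<le> p * q) \<Longrightarrow>
     (real d \<le> \<alpha> / \<beta> \<longrightarrow> real k * real d * \<beta> - real (k div 2) * real ((k + 1) div 2) * \<beta>
            \<le> real p * \<alpha> + \<beta> * (real q * real (n div s) - real H))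
    \<and> (\<forall>k1 \<in> {(k + 1) div 2..k}. real d + real k - 2 * real k1 - 1 \<le> \<alpha> / \<beta>
          \<and> \<alpha> / \<beta> < min (real d + real k - 2 * real k1 + 1) (real d) \<longrightarrow>
          real k1 * \<alpha> + (real d - real k1) * (real k - real k1) * \<beta>
            \<le> real p * \<alpha> + \<beta> * (real q * real (n div s) - real H))
    \<and> (\<alpha> / \<beta> < real d - real k - 1 \<longrightarrow> real k * \<alpha> \<le> real p * \<alpha> + \<beta> * (real q * real (n div s) - real H))"
    using final_arith[OF a0 b0] dd by blast
  have c1: "real d \<le> \<alpha> / \<beta> \<longrightarrow> Fstar n k s \<alpha> \<beta> = ereal (real k * real d * \<beta>
               - of_int \<lfloor>real k / 2\<rfloor> * of_int \<lceil>real k / 2\<rceil> * \<beta>)"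
  proof
    assume h: "real d \<le> \<alpha> / \<beta>"
    let ?v = "real k * real d * \<beta> - real hf * real hc * \<beta>"
    have lo: "ereal ?v \<le> Fstar n k s \<alpha> \<beta>"
      using FA h unfolding hf_def hc_def by (intro Fstar_ge[OF a0 b0]) blast
    interpret U: ubloc n s hf hc False \<alpha> \<beta>
      using s2 kd hfc a0 b0 dd by unfold_locales auto
    have "Fstar n k s \<alpha> \<beta> \<le> ereal (real hf * U.c1 + real hc * U.c2)" using U.upper hfc by simp
    moreover have "real hf * U.c1 + real hc * U.c2 = ?v"
    proof -
      have kk: "real k = real hf + real hc" using hfc by simp
      show ?thesis unfolding U.c1_def U.c2_def kk dd[symmetric] by (simp add: algebra_simps)
    qed
    ultimately have up: "Fstar n k s \<alpha> \<beta> \<le> ereal ?v" by simp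
    have "Fstar n k s \<alpha> \<beta> = ereal ?v" using lo up by simp
    then show "Fstar n k s \<alpha> \<beta> = ereal (real k * real d * \<beta>
               - of_int \<lfloor>real k / 2\<rfloor> * of_int \<lceil>real k / 2\<rceil> * \<beta>)"
      by (simp add: floor_half ceil_half hf_def hc_def)
  qed
  have c2: "\<forall>k1 \<in> {nat \<lceil>real k / 2\<rceil>..k}.
            real d + real k - 2 * real k1 - 1 \<le> \<alpha> / \<beta>
            \<and> \<alpha> / \<beta> < min (real d + real k - 2 * real k1 + 1) (real d) \<longrightarrow>
            Fstar n k s \<alpha> \<beta> = ereal (real k1 * \<alpha> + (real d - real k1) * (real k - real k1) * \<beta>)"
  proof (intro ballI impI)
    fix k1 assume k1r: "k1 \<in> {nat \<lceil>real k / 2\<rceil>..k}"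
      and h: "real d + real k - 2 * real k1 - 1 \<le> \<alpha> / \<beta> \<and> \<alpha> / \<beta> < min (real d + real k - 2 * real k1 + 1) (real d)"
    have k1: "k1 \<in> {(k + 1) div 2..k}" using k1r by (simp add: ceil_half)
    let ?v = "real k1 * \<alpha> + (real d - real k1) * (real k - real k1) * \<beta>"
    have lo: "ereal ?v \<le> Fstar n k s \<alpha> \<beta>"
      using FA h k1 by (intro Fstar_ge[OF a0 b0]) blast
    have k1k: "k1 \<le> k" using k1 by simp
    interpret U: ubloc n s k1 "k - k1" True \<alpha> \<beta>
      using s2 kd k1k a0 b0 dd by unfold_locales auto
    have "Fstar n k s \<alpha> \<beta> \<le> ereal (real k1 * U.c1 + real (k - k1) * U.c2)" using U.upper k1k by simp
    moreover have "real k1 * U.c1 + real (k - k1) * U.c2 = ?v"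
      unfolding U.c1_def U.c2_def dd[symmetric] using k1k by (simp add: algebra_simps of_nat_diff)
    ultimately have up: "Fstar n k s \<alpha> \<beta> \<le> ereal ?v" by simp
    show "Fstar n k s \<alpha> \<beta> = ereal ?v" using lo up by simp
  qed
  have c3: "\<alpha> / \<beta> < real d - real k - 1 \<longrightarrow> Fstar n k s \<alpha> \<beta> = ereal (real k * \<alpha>)"
  proof
    assume h: "\<alpha> / \<beta> < real d - real k - 1"
    have lo: "ereal (real k * \<alpha>) \<le> Fstar n k s \<alpha> \<beta>"
      using FA h by (intro Fstar_ge[OF a0 b0]) blast
    interpret U: ubloc n s k 0 True \<alpha> \<beta>
      using s2 kd a0 b0 dd by unfold_locales auto
    have "Fstar n k s \<alpha> \<beta> \<le> ereal (real k * U.c1 + real 0 * U.c2)" using U.upper by simp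
    then have up: "Fstar n k s \<alpha> \<beta> \<le> ereal (real k * \<alpha>)" by (simp add: U.c1_def)
    show "Fstar n k s \<alpha> \<beta> = ereal (real k * \<alpha>)" using lo up by simp
  qed
  show ?thesis using c1 c2 c3 by blast
qed

end
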